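(* For every real number $\beta$, the distribution of $\beta H(n)\bmod 1$ converges to a probability measure on the circle $\mathbb{R}/\mathbb{Z}$.
   Context: $H$ is Hofstadter's $H$ sequence: $H(1)=1$ and $H(n)=n-H(H(H(n-1)))$ for $n>1$. "The distribution of $u_n\bmod 1$ converges to $\mu$" means that $\frac1N\sum_{n=1}^N\delta_{u_n\bmod 1}$ converges weakly to $\mu$ on $\mathbb{R}/\mathbb{Z}$. *)

theory Defs
  imports "HOL-Analysis.Analysis" "HOL-Probability.Probability"
begin

text \<open>Hofstadter's H sequence, H(1) = 1, H(n) = n - H(H(H(n-1))) for n > 1.
  The guards a < n, b < n are only there to make termination evident; they are
  always satisfied (1 <= H k <= k), see lemma hofH_rec.  The value at 0 is irrelevant.\<close>
function hofH :: "nat \<Rightarrow> nat" where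
  "hofH n = (if n \<le> 1 then 1 else
     (let a = hofH (n - 1);
          b = (if a < n then hofH a else 0);
          c = (if b < n then hofH b else 0)
      in n - c))"
  by auto
termination by (relation "Wellfounded.measure id") auto

declare hofH.simps [simp del]

lemma hofH_bounds: "n \<ge> 1 \<Longrightarrow> 1 \<le> hofH n \<and> hofH n \<le> n"
proof (induction n rule: less_induct)
  case (less n)
  show ?case
  proof (cases "n \<le> 1")
    case True then show ?thesis using less.prems by (simp add: hofH.simps[of n])
  next
    case False
    define a where "a = hofH (n - 1)"
    have a: "1 \<le> a \<and> a \<le> n - 1" using less.IH[of "n-1"] False a_def by auto
    define b where "b = hofH a"
    have an: "a < n" using a False by auto
    have b: "1 \<le> b \<and> b \<le> n - 1" using less.IH[of a, OF an] a b_def by auto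
    define c where "c = hofH b"
    have bn: "b < n" using b False by auto
    have c: "1 \<le> c \<and> c \<le> n - 1" using less.IH[of b, OF bn] b c_def by auto
    have "hofH n = n - c"
      apply (subst hofH.simps)
      using False an bn unfolding Let_def a_def b_def c_def by simp
    then show ?thesis using c False by auto
  qed
qed

lemma hofH_rec: "hofH 1 = 1" "n > 1 \<Longrightarrow> hofH n = n - hofH (hofH (hofH (n - 1)))"
proof -
  show "hofH 1 = 1" by (subst hofH.simps) simp
next
  assume n: "n > 1"
  have n1: "1 \<le> n - 1" using n by auto
  have a: "hofH (n-1) < n" using hofH_bounds[OF n1] n by auto
  have a1: "1 \<le> hofH (n-1)" using hofH_bounds[OF n1] by auto
  have b: "hofH (hofH (n-1)) < n" using hofH_bounds[OF a1] a by auto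
  show "hofH n = n - hofH (hofH (hofH (n - 1)))"
    apply (subst hofH.simps)
    using n a b by (simp add: Let_def)
qed

text \<open>A probability measure on the circle R/Z, represented as a Borel probability
  measure on the reals concentrated on the fundamental domain [0,1).\<close>
definition circle_prob_measure :: "real measure \<Rightarrow> bool" where
  "circle_prob_measure \<mu> \<longleftrightarrow> prob_space \<mu> \<and> sets \<mu> = sets borel \<and>
     emeasure \<mu> (UNIV - {0..<1}) = 0"

text \<open>The empirical distributions (1/N) sum_{n=1}^N delta_{u_n mod 1} converge weakly on R/Z
  to mu: continuous functions on R/Z are exactly the continuous 1-periodic functions on R.\<close>
definition distr_mod1_converges :: "(nat \<Rightarrow> real) \<Rightarrow> real measure \<Rightarrow> bool" where
  "distr_mod1_converges u \<mu> \<longleftrightarrow>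
     (\<forall>f :: real \<Rightarrow> real. continuous_on UNIV f \<longrightarrow> (\<forall>x. f (x + 1) = f x) \<longrightarrow>
        (\<lambda>N. (\<Sum>n = 1..N. f (u n)) / real N) \<longlonglongrightarrow> integral\<^sup>L \<mu> f)"

end

theory Submission
  imports Defs
begin

definition hg :: "nat \<Rightarrow> nat" where "hg n = (if n = 0 then 0 else hofH n)"

lemma hg_0[simp]: "hg 0 = 0" by (simp add: hg_def)
lemma hofH_1': "hofH (Suc 0) = Suc 0" using hofH_rec(1) by simp
lemma hg_1[simp]: "hg 1 = 1" "hg (Suc 0) = Suc 0" by (simp_all add: hg_def hofH_1')

lemma hg_bounds: "n \<ge> 1 \<Longrightarrow> 1 \<le> hg n \<and> hg n \<le> n"
  using hofH_bounds by (simp add: hg_def)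

lemma hg_le: "hg n \<le> n"
  using hg_bounds[of n] by (cases "n = 0") auto

lemma hg_rec: assumes "n \<ge> 1" shows "hg n = n - hg (hg (hg (n - 1)))"
proof (cases "n = 1")
  case True then show ?thesis by simp
next
  case False
  then have n: "n > 1" using assms by auto
  have a: "1 \<le> hofH (n-1)" using hofH_bounds[of "n-1"] n by auto
  have b: "1 \<le> hofH (hofH (n-1))" using hofH_bounds[OF a] by auto
  have c: "1 \<le> hofH (hofH (hofH (n-1)))" using hofH_bounds[OF b] by auto
  show ?thesis using n a b c hofH_rec(2)[OF n] by (simp add: hg_def)
qed

lemma hg_step_aux:
  assumes IH: "\<And>j. j < n \<Longrightarrow> hg (Suc j) = hg j \<or> hg (Suc j) = Suc (hg j)"
    and xy: "y = x \<or> y = Suc x" and xn: "x < n"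
  shows "hg y = hg x \<or> hg y = Suc (hg x)"
  using xy IH[OF xn] by auto

lemma hg_step: "hg (Suc n) = hg n \<or> hg (Suc n) = Suc (hg n)"
proof (induction n rule: less_induct)
  case (less n)
  show ?case
  proof (cases "n = 0")
    case True then show ?thesis by simp
  next
    case False
    define A where "A = hg (n - 1)"
    define B where "B = hg n"
    have AB: "B = A \<or> B = Suc A" using less.IH[of "n-1"] False unfolding A_def B_def
      by (metis Suc_pred' diff_less less_one not_gr_zero)
    have An: "A < n" using hg_le[of "n-1"] False unfolding A_def by auto
    have s2: "hg B = hg A \<or> hg B = Suc (hg A)"
      using hg_step_aux[OF less.IH AB An] .
    have hAn: "hg A < n" using hg_le[of A] An by auto
    have s3: "hg (hg B) = hg (hg A) \<or> hg (hg B) = Suc (hg (hg A))"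
      using hg_step_aux[OF less.IH s2 hAn] .
    have r1: "hg (Suc n) = Suc n - hg (hg B)" using hg_rec[of "Suc n"] unfolding B_def by simp
    have r0: "hg n = n - hg (hg A)" using hg_rec[of n] False unfolding A_def by simp
    have le1: "hg (hg B) \<le> n" using hg_le[of "hg B"] hg_le[of B] hg_le[of n] unfolding B_def by linarith
    have le0: "hg (hg A) \<le> n - 1" using hg_le[of "hg A"] hg_le[of A] hg_le[of "n-1"] unfolding A_def by linarith
    show ?thesis using s3 r1 r0 le1 le0 False unfolding B_def[symmetric] by auto
  qed
qed

lemma hg_mono: "m \<le> n \<Longrightarrow> hg m \<le> hg n"
proof (induction n)
  case 0 then show ?case by simp
next
  case (Suc n)
  then show ?case using hg_step[of n] by (cases "m = Suc n") auto
qed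

fun nar :: "nat \<Rightarrow> nat" where
  "nar 0 = 1" | "nar (Suc 0) = 1" | "nar (Suc (Suc 0)) = 1"
| "nar (Suc (Suc (Suc k))) = nar (Suc (Suc k)) + nar k"

lemma nar_rec: "nar (k + 3) = nar (k + 2) + nar k"
  by (simp add: eval_nat_numeral)

lemma nar_small: "nar 1 = 1" "nar 2 = 1" "nar 3 = 2" "nar 4 = 3" "nar 5 = 4"
  by (simp_all add: eval_nat_numeral)

declare nar.simps(4)[simp del]

lemma nar_pos: "nar k \<ge> 1"
  by (induction k rule: nar.induct) (auto simp: nar.simps)

lemma nar_mono_Suc: "nar k \<le> nar (Suc k)"
  by (induction k rule: nar.induct) (auto simp: nar.simps)

lemma nar_mono: "j \<le> k \<Longrightarrow> nar j \<le> nar k"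
  by (rule lift_Suc_mono_le[of nar]) (auto simp: nar_mono_Suc)

lemma hg_small: "hg 2 = 1" "hg 3 = 2" "hg 4 = 3"
proof -
  show h2: "hg 2 = 1" using hg_rec[of 2] by simp
  show h3: "hg 3 = 2" using hg_rec[of 3] h2 by simp
  show "hg 4 = 3" using hg_rec[of 4] h2 h3 by simp
qed

lemma hg_small': "hg (Suc (Suc 0)) = Suc 0" "hg (Suc (Suc (Suc 0))) = Suc (Suc 0)"
  "hg (Suc (Suc (Suc (Suc 0)))) = Suc (Suc (Suc 0))"
proof -
  show a: "hg (Suc (Suc 0)) = Suc 0" using hg_small(1) by (simp only: numeral_2_eq_2)
  show b: "hg (Suc (Suc (Suc 0))) = Suc (Suc 0)" using hg_small(2) by (simp only: numeral_2_eq_2 numeral_3_eq_3)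
  have "(4::nat) = Suc (Suc (Suc (Suc 0)))" by simp
  then show "hg (Suc (Suc (Suc (Suc 0)))) = Suc (Suc (Suc 0))" using hg_small(3) by (simp only: numeral_3_eq_3)
qed

lemma block_lemma:
  assumes "k \<ge> 1" "r \<le> nar k"
  shows "hg (nar (k + 2) + r) = nar (k + 1) + hg r"
  using assms
proof (induction k arbitrary: r rule: less_induct)
  case (less k)
  show ?case
  proof (cases "k \<le> 2")
    case True
    note n = nar_small
    consider "k = 1" | "k = 2" using less.prems True by linarith
    then show ?thesis
    proof cases
      case 1
      then have "r = 0 \<or> r = 1" using less.prems n by auto
      have e: "k + 2 = 3" "k + 1 = 2" using 1 by simp_all
      show ?thesis unfolding e n using \<open>r = 0 \<or> r = 1\<close> hg_small hg_small' by auto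
    next
      case 2
      then have "r = 0 \<or> r = 1" using less.prems n by auto
      have e: "k + 2 = 4" "k + 1 = 3" using 2 by simp_all
      show ?thesis unfolding e n using \<open>r = 0 \<or> r = 1\<close> hg_small hg_small' by auto
    qed
  next
    case False
    define m where "m = k - 3"
    have km: "k = m + 3" using False unfolding m_def by simp
    have e1: "m + 2 + 2 = m + 4" "m + 2 + 1 = m + 3" "m + 1 + 2 = m + 3" "m + 1 + 1 = m + 2" by simp_all
    have IH1: "hg (nar (m + 4) + r) = nar (m + 3) + hg r" if "r \<le> nar (m+2)" for r
      by (rule less.IH[of "m+2", unfolded e1]) (use km that in auto)
    have IH2: "hg (nar (m + 3) + r) = nar (m + 2) + hg r" if "r \<le> nar (m+1)" for r
      by (rule less.IH[of "m+1", unfolded e1]) (use km that in auto)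
    have hn1: "hg (nar (m+3)) = nar (m+2)" using IH2[of 0] by simp
    have hn2: "hg (nar (m+2)) = nar (m+1)"
    proof (cases m)
      case 0 then show ?thesis by (simp add: hg_small nar_small)
    next
      case (Suc m')
      have "hg (nar (m' + 1 + 2) + 0) = nar (m' + 1 + 1) + hg 0"
        by (rule less.IH) (use km Suc in auto)
      then show ?thesis using Suc by simp
    qed
    have e2: "m+2+3 = m+5" "m+2+2 = m+4" "m+1+3 = m+4" "m+1+2 = m+3" by simp_all
    have rec5: "nar (m+5) = nar (m+4) + nar (m+2)" by (rule nar_rec[of "m+2", unfolded e2])
    have rec4: "nar (m+4) = nar (m+3) + nar (m+1)" by (rule nar_rec[of "m+1", unfolded e2])
    show ?thesis using less.prems(2) unfolding km
    proof (induction r)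
      case 0
      have "hg (nar (m+4) + nar (m+2)) = nar (m+3) + nar (m+1)"
        using IH1[of "nar (m+2)"] hn2 by simp
      then show ?case using rec5 rec4 by (simp add: add.commute)
    next
      case (Suc r)
      have r3: "r \<le> nar (m+3)" using Suc.prems by simp
      have prev: "hg (nar (m + 5) + r) = nar (m + 4) + hg r"
        using Suc.IH r3 by (simp add: add.commute)
      have h1: "hg r \<le> nar (m+2)" using hg_mono[OF r3] hn1 by simp
      have step2: "hg (nar (m+4) + hg r) = nar (m+3) + hg (hg r)" using IH1[OF h1] .
      have h2: "hg (hg r) \<le> nar (m+1)" using hg_mono[OF h1] hn2 by simp
      have step3: "hg (nar (m+3) + hg (hg r)) = nar (m+2) + hg (hg (hg r))" using IH2[OF h2] .
      have hhh: "hg (hg (hg r)) \<le> r" using hg_le[of r] hg_le[of "hg r"] hg_le[of "hg (hg r)"] by linarith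
      have rr: "hg (Suc r) = Suc r - hg (hg (hg r))" using hg_rec[of "Suc r"] by simp
      have "hg (nar (m + 5) + Suc r) = (nar (m + 5) + Suc r) - hg (hg (hg (nar (m + 5) + r)))"
        using hg_rec[of "nar (m + 5) + Suc r"] by simp
      also have "\<dots> = (nar (m + 5) + Suc r) - (nar (m+2) + hg (hg (hg r)))"
        using prev step2 step3 by simp
      also have "\<dots> = nar (m+4) + hg (Suc r)" using rr rec5 hhh by simp
      finally show ?case by (simp add: add.commute)
    qed
  qed
qed

lemma theta_exists: "\<exists>\<theta>::real. \<theta>^3 = \<theta>^2 + 1 \<and> 1.4 \<le> \<theta> \<and> \<theta> \<le> 1.5"
proof -
  have "\<exists>x\<ge>1.4. x \<le> 1.5 \<and> (\<lambda>x::real. x^3 - x^2 - 1) x = 0"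
    by (rule IVT) (auto intro!: continuous_intros simp: power3_eq_cube power2_eq_square)
  then obtain x :: real where "1.4 \<le> x \<and> x \<le> 1.5 \<and> x^3 - x^2 - 1 = 0" by blast
  then show ?thesis by (intro exI[of _ x]) simp
qed

lemma decay_summable:
  fixes e :: "nat \<Rightarrow> real"
  assumes rec: "\<And>j. j \<ge> J \<Longrightarrow> e (j+3) = e (j+2) + e j"
    and lim: "e \<longlonglongrightarrow> 0"
  shows "summable (\<lambda>j. \<bar>e j\<bar>)"
proof -
  obtain \<theta> :: real where th: "\<theta>^3 = \<theta>^2 + 1" "1.4 \<le> \<theta>" "\<theta> \<le> 1.5" using theta_exists by blast
  define a where "a = \<theta> - 1"
  define b where "b = \<theta>^2 - \<theta>"
  have thb: "\<theta> * b = 1" using th(1) unfolding b_def by (simp add: power2_eq_square power3_eq_cube algebra_simps)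
  have tha: "\<theta> * a = b" unfolding a_def b_def by (simp add: power2_eq_square algebra_simps)
  have a_bds: "0.4 \<le> a" "a \<le> 0.5" using th unfolding a_def by auto
  have b_eq: "b = \<theta> * a" using tha by simp
  have b_lo: "0.56 \<le> b"
  proof -
    have "1.4 * 0.4 \<le> \<theta> * a" by (rule mult_mono) (use th a_bds in auto)
    then show ?thesis using b_eq by simp
  qed
  have b_hi: "b \<le> 0.75"
  proof -
    have "\<theta> * a \<le> 1.5 * 0.5" by (rule mult_mono) (use th a_bds in auto)
    then show ?thesis using b_eq by simp
  qed
  define f where "f j = e (j+2) + a * e (j+1) + b * e j" for j
  have frec: "f (Suc j) = \<theta> * f j" if "j \<ge> J" for j
  proof -
    have "f (Suc j) = e (j+3) + a * e (j+2) + b * e (j+1)" unfolding f_def by (simp add: eval_nat_numeral)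
    also have "\<dots> = (1 + a) * e (j+2) + b * e (j+1) + e j" using rec[OF that] by (simp add: algebra_simps)
    also have "\<dots> = \<theta> * f j"
    proof -
      have "\<theta> * f j = \<theta> * e (j+2) + (\<theta>*a) * e (j+1) + (\<theta>*b) * e j" by (simp add: f_def algebra_simps)
      then show ?thesis using tha thb by (simp add: a_def)
    qed
    finally show ?thesis .
  qed
  have flim: "f \<longlonglongrightarrow> 0"
  proof -
    have l1: "(\<lambda>j. e (j+1)) \<longlonglongrightarrow> 0" using LIMSEQ_Suc[OF lim] by simp
    have l2: "(\<lambda>j. e (j+2)) \<longlonglongrightarrow> 0" using LIMSEQ_Suc[OF LIMSEQ_Suc[OF lim]] by (simp add: eval_nat_numeral)
    have "(\<lambda>j. e (j+2) + a * e (j+1) + b * e j) \<longlonglongrightarrow> 0 + a * 0 + b * 0"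
      by (intro tendsto_intros l1 l2 lim)
    then show ?thesis unfolding f_def by simp
  qed
  have fzero: "f j = 0" if "j \<ge> J" for j
  proof (rule ccontr)
    assume nz: "f j \<noteq> 0"
    have grow: "\<bar>f n\<bar> \<ge> \<bar>f j\<bar>" if "n \<ge> j" for n
      using that
    proof (induction n rule: dec_induct)
      case base then show ?case by simp
    next
      case (step n)
      have "\<bar>f (Suc n)\<bar> = \<theta> * \<bar>f n\<bar>" using frec[of n] step.hyps \<open>j \<ge> J\<close> th by (simp add: abs_mult)
      also have "\<dots> \<ge> \<bar>f n\<bar>" using th by (simp add: mult_le_cancel_right1)
      finally show ?case using step.IH by simp
    qed
    have pos: "\<bar>f j\<bar> > 0" using nz by simp
    have "eventually (\<lambda>n. dist (f n) 0 < \<bar>f j\<bar>) sequentially"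
      using tendsto_iff[THEN iffD1, OF flim, rule_format, OF pos] .
    then have "eventually (\<lambda>n. \<bar>f n\<bar> < \<bar>f j\<bar>) sequentially" by simp
    then obtain N where N: "\<And>n. n \<ge> N \<Longrightarrow> \<bar>f n\<bar> < \<bar>f j\<bar>" by (auto simp: eventually_sequentially)
    have "\<bar>f (max N j)\<bar> < \<bar>f j\<bar>" by (rule N) simp
    moreover have "\<bar>f j\<bar> \<le> \<bar>f (max N j)\<bar>" by (rule grow) simp
    ultimately show False by simp
  qed
  have rec2: "e (j+2) = - a * e (j+1) - b * e j" if "j \<ge> J" for j
    using fzero[OF that] unfolding f_def by simp
  define Q where "Q j = (e (j+1))^2 + a * e (j+1) * e j + b * (e j)^2" for j
  have Qrec: "Q (Suc j) = b * Q j" if "j \<ge> J" for j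
  proof -
    have "Q (Suc j) = (e (j+2))^2 + a * e (j+2) * e (j+1) + b * (e (j+1))^2"
      unfolding Q_def by (simp add: eval_nat_numeral)
    also have "\<dots> = b * Q j" unfolding rec2[OF that] Q_def
      by (simp add: power2_eq_square algebra_simps)
    finally show ?thesis .
  qed
  have Qpow: "Q (J + n) = b^n * Q J" for n
    by (induction n) (use Qrec in auto)
  define \<kappa> where "\<kappa> = b - a^2/4"
  have kpos: "\<kappa> \<ge> 2/5"
  proof -
    have "a^2 \<le> 0.5^2" by (rule power_mono) (use a_bds in auto)
    then have h1: "a^2 \<le> 1/4" by (simp add: power2_eq_square)
    have h2: "14/25 \<le> b" using b_lo by simp
    show ?thesis unfolding \<kappa>_def using h1 h2 by linarith
  qed
  have Qlow: "\<kappa> * (e j)^2 \<le> Q j" for j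
  proof -
    have "Q j = (e (j+1) + a/2 * e j)^2 + \<kappa> * (e j)^2"
      unfolding Q_def \<kappa>_def by (simp add: power2_eq_square algebra_simps)
    then show ?thesis by simp
  qed
  have QJ: "Q J \<ge> 0"
  proof -
    have "0 \<le> \<kappa> * (e J)^2" using kpos by simp
    then show ?thesis using Qlow[of J] by linarith
  qed
  define C where "C = sqrt (Q J / \<kappa>)"
  define \<rho> where "\<rho> = sqrt b"
  have rho: "0 \<le> \<rho>" "\<rho> < 1" unfolding \<rho>_def using b_lo b_hi by auto
  have bnd: "\<bar>e (n + J)\<bar> \<le> C * \<rho>^n" for n
  proof -
    have kp: "\<kappa> > 0" using kpos by linarith
    have "\<kappa> * (e (J+n))^2 \<le> b^n * Q J" using Qlow[of "J+n"] Qpow[of n] by simp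
    then have "(e (J+n))^2 \<le> b^n * Q J / \<kappa>" using kp by (simp add: pos_le_divide_eq mult.commute)
    then have "sqrt ((e (J+n))^2) \<le> sqrt (b^n * Q J / \<kappa>)" by (rule real_sqrt_le_mono)
    also have "sqrt (b^n * Q J / \<kappa>) = \<rho>^n * C"
    proof -
      have "b^n * Q J / \<kappa> = b^n * (Q J / \<kappa>)" by simp
      then show ?thesis unfolding C_def \<rho>_def by (simp only: real_sqrt_mult real_sqrt_power)
    qed
    finally show ?thesis by (simp add: add.commute mult.commute)
  qed
  have "summable (\<lambda>n. C * \<rho>^n)" using rho by (intro summable_mult summable_geometric) auto
  then have "summable (\<lambda>n. \<bar>e (n + J)\<bar>)"
    by (rule summable_comparison_test'[where N=0]) (use bnd in auto)
  then show ?thesis by (subst summable_iff_shift[symmetric, of _ J])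
qed

lemma norm_cis_minus_1: "norm (cis a - 1) \<le> \<bar>a\<bar>"
proof -
  have c: "cos a = 1 - 2 * (sin (a/2))^2" using cos_double_sin[of "a/2"] by simp
  have "(norm (cis a - 1))^2 = (cos a - 1)^2 + (sin a)^2"
    by (simp add: cmod_power2)
  also have "\<dots> = 2 - 2 * cos a" using sin_cos_squared_add[of a] by (simp add: power2_eq_square algebra_simps)
  also have "\<dots> = (2 * sin (a/2))^2" using c by (simp add: power2_eq_square)
  finally have "norm (cis a - 1) = \<bar>2 * sin (a/2)\<bar>" using real_sqrt_abs by (metis norm_ge_zero real_sqrt_unique)
  also have "\<dots> \<le> 2 * \<bar>a/2\<bar>" using abs_sin_x_le_abs_x[of "a/2"] by (simp add: abs_mult)
  finally show ?thesis by simp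
qed

lemma cis_int_2pi: "cis (2 * pi * real_of_int k) = 1"
  by (rule complex_eqI) (simp_all add: cos_int_2pin sin_int_2pin)

lemma pisot:
  fixes t :: real
  assumes lim: "(\<lambda>j. cis (t * real (nar j))) \<longlonglongrightarrow> 1"
  shows "summable (\<lambda>j. norm (cis (t * real (nar j)) - 1))"
proof -
  define x where "x j = t * real (nar j) / (2 * pi)" for j
  define k where "k j = round (x j)" for j
  define e where "e j = x j - real_of_int (k j)" for j
  have ehalf: "\<bar>e j\<bar> \<le> 1/2" for j unfolding e_def k_def using of_int_round_abs_le[of "x j"] by linarith
  have cis_e: "cis (t * real (nar j)) = cis (2 * pi * e j)" for j
  proof -
    have "t * real (nar j) = 2 * pi * e j + 2 * pi * real_of_int (k j)" unfolding e_def x_def by (simp add: field_simps)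
    then show ?thesis by (simp add: cis_mult[symmetric] cis_int_2pi)
  qed
  have coslim: "(\<lambda>j. cos (2 * pi * e j)) \<longlonglongrightarrow> 1"
  proof -
    have "(\<lambda>j. Re (cis (t * real (nar j)))) \<longlonglongrightarrow> Re 1" by (intro tendsto_Re lim)
    then show ?thesis by (simp add: cis_e)
  qed
  have elim: "e \<longlonglongrightarrow> 0"
  proof (rule tendstoI)
    fix \<epsilon> :: real assume "\<epsilon> > 0"
    define \<delta> where "\<delta> = min \<epsilon> (1/2)"
    have d: "0 < \<delta>" "\<delta> \<le> 1/2" "\<delta> \<le> \<epsilon>" using \<open>\<epsilon> > 0\<close> unfolding \<delta>_def by auto
    have "cos (2 * pi * \<delta>) < cos 0" by (rule cos_monotone_0_pi) (use d in auto)
    then have lt1: "cos (2 * pi * \<delta>) < 1" by simp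
    have "eventually (\<lambda>j. dist (cos (2 * pi * e j)) 1 < 1 - cos (2 * pi * \<delta>)) sequentially"
      using tendstoD[OF coslim] lt1 by simp
    then show "eventually (\<lambda>j. dist (e j) 0 < \<epsilon>) sequentially"
    proof (rule eventually_mono)
      fix j assume "dist (cos (2 * pi * e j)) 1 < 1 - cos (2 * pi * \<delta>)"
      then have cgt: "cos (2 * pi * \<delta>) < cos (2 * pi * e j)" by (simp add: dist_real_def abs_if split: if_splits)
      have "\<bar>e j\<bar> < \<delta>"
      proof (rule ccontr)
        assume "\<not> \<bar>e j\<bar> < \<delta>"
        then have "cos (2 * pi * \<bar>e j\<bar>) \<le> cos (2 * pi * \<delta>)"
          by (intro cos_monotone_0_pi_le) (use d ehalf[of j] in auto)
        moreover have "cos (2 * pi * \<bar>e j\<bar>) = cos (2 * pi * e j)"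
          by (cases "e j \<ge> 0") (simp_all add: abs_if)
        ultimately show False using cgt by simp
      qed
      then show "dist (e j) 0 < \<epsilon>" using d by simp
    qed
  qed
  obtain J where J: "\<And>j. j \<ge> J \<Longrightarrow> \<bar>e j\<bar> < 1/6"
  proof -
    have "eventually (\<lambda>j. dist (e j) 0 < 1/6) sequentially" by (rule tendstoD[OF elim]) simp
    then show ?thesis using that by (auto simp: eventually_sequentially)
  qed
  have rec: "e (j+3) = e (j+2) + e j" if "j \<ge> J" for j
  proof -
    have xr: "x (j+3) = x (j+2) + x j" unfolding x_def using nar_rec[of j] by (simp add: field_simps)
    define m where "m = k (j+3) - k (j+2) - k j"
    have "real_of_int m = e (j+2) + e j - e (j+3)" unfolding m_def e_def using xr by simp
    moreover have "\<bar>e (j+2) + e j - e (j+3)\<bar> < 1" using J[of j] J[of "j+2"] J[of "j+3"] that by auto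
    ultimately have "\<bar>real_of_int m\<bar> < 1" by simp
    then have "m = 0" by linarith
    then show ?thesis using \<open>real_of_int m = _\<close> by simp
  qed
  have se: "summable (\<lambda>j. \<bar>e j\<bar>)" by (rule decay_summable[OF rec elim])
  have "summable (\<lambda>j. 2 * pi * \<bar>e j\<bar>)" by (intro summable_mult se)
  then show ?thesis
  proof (rule summable_comparison_test')
    fix j
    have "norm (norm (cis (t * real (nar j)) - 1)) = norm (cis (2 * pi * e j) - 1)" by (simp add: cis_e)
    also have "\<dots> \<le> \<bar>2 * pi * e j\<bar>" by (rule norm_cis_minus_1)
    also have "\<dots> = 2 * pi * \<bar>e j\<bar>" by (simp add: abs_mult)
    finally show "norm (norm (cis (t * real (nar j)) - 1)) \<le> 2 * pi * \<bar>e j\<bar>" .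
  qed
qed

lemma lower3:
  fixes x \<epsilon> p :: "nat \<Rightarrow> real"
  assumes rec: "\<And>j. p j * x (j+2) + (1 - p j) * x j + \<epsilon> j \<le> x (j+3)"
    and pb: "\<And>j. 1/2 \<le> p j \<and> p j \<le> 1"
    and lo: "lo \<le> x j" "lo \<le> x (j+1)" "lo \<le> x (j+2)"
  defines "E \<equiv> \<bar>\<epsilon> j\<bar> + \<bar>\<epsilon> (j+1)\<bar> + \<bar>\<epsilon> (j+2)\<bar>"
  shows "lo + (x (j+2) - lo)/4 - E \<le> x (j+3)"
    "lo + (x (j+2) - lo)/4 - E \<le> x (j+4)"
    "lo + (x (j+2) - lo)/4 - E \<le> x (j+5)"
proof -
  define v where "v = x (j+2)"
  define D where "D = v - lo"
  have D0: "D \<ge> 0" using lo unfolding D_def v_def by simp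
  have p0: "1/2 \<le> p j" "p j \<le> 1" using pb[of j] by auto
  have p1: "1/2 \<le> p (j+1)" "p (j+1) \<le> 1" using pb[of "j+1"] by auto
  have p2: "1/2 \<le> p (j+2)" "p (j+2) \<le> 1" using pb[of "j+2"] by auto
  have ea: "- \<bar>\<epsilon> i\<bar> \<le> \<epsilon> i" for i by simp
  have a1: "lo - p j * lo \<le> x j - p j * x j"
    using mult_left_mono[of lo "x j" "1 - p j"] lo p0 by (simp add: algebra_simps)
  have a2: "D/2 \<le> p j * v - p j * lo" using mult_right_mono[OF p0(1) D0] unfolding D_def by (simp add: algebra_simps)
  have r3: "p j * v + x j - p j * x j + \<epsilon> j \<le> x (j+3)" using rec[of j] unfolding v_def by (simp add: algebra_simps)
  have x3: "lo + D/2 - \<bar>\<epsilon> j\<bar> \<le> x (j+3)"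
    using r3 a1 a2 ea[of j] by linarith
  define y where "y = x (j+3)"
  have i: "j+1+3 = j+4" "j+1+2 = j+3" "j+2+3 = j+5" "j+2+2 = j+4" by simp_all
  have r4': "p (j+1) * y + (1 - p (j+1)) * x (j+1) + \<epsilon> (j+1) \<le> x (j+4)"
    using rec[of "j+1", unfolded i] unfolding y_def .
  have m4: "(1 - p (j+1)) * x (j+1) = x (j+1) - p (j+1) * x (j+1)" by (simp add: algebra_simps)
  have r4: "p (j+1) * y + x (j+1) - p (j+1) * x (j+1) + \<epsilon> (j+1) \<le> x (j+4)"
    using r4' m4 by linarith
  have b1: "p (j+1) * (lo + D/2 - \<bar>\<epsilon> j\<bar>) \<le> p (j+1) * y" by (rule mult_left_mono) (use x3 p1 in \<open>auto simp: y_def\<close>)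
  have b2: "lo - p (j+1) * lo \<le> x (j+1) - p (j+1) * x (j+1)"
    using mult_left_mono[of lo "x (j+1)" "1 - p (j+1)"] lo p1 by (simp add: algebra_simps)
  have b3: "D/4 \<le> p (j+1) * (D/2)" using mult_right_mono[OF p1(1), of "D/2"] D0 by simp
  have b4: "p (j+1) * \<bar>\<epsilon> j\<bar> \<le> \<bar>\<epsilon> j\<bar>" using mult_right_mono[OF p1(2), of "\<bar>\<epsilon> j\<bar>"] by simp
  have b5: "p (j+1) * (lo + D/2 - \<bar>\<epsilon> j\<bar>) = p (j+1) * lo + p (j+1) * (D/2) - p (j+1) * \<bar>\<epsilon> j\<bar>"
    by (simp add: algebra_simps)
  have x4: "lo + D/4 - \<bar>\<epsilon> j\<bar> - \<bar>\<epsilon> (j+1)\<bar> \<le> x (j+4)"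
    using r4 b1 b2 b3 b4 b5 ea[of "j+1"] by linarith
  define L4 where "L4 = lo + D/4 - \<bar>\<epsilon> j\<bar> - \<bar>\<epsilon> (j+1)\<bar>"
  define z where "z = x (j+4)"
  have vL4: "L4 \<le> v"
  proof -
    have "0 \<le> \<bar>\<epsilon> j\<bar>" "0 \<le> \<bar>\<epsilon> (j+1)\<bar>" by simp_all
    then show ?thesis unfolding L4_def using D0 unfolding D_def by (simp add: field_simps)
  qed
  have r5': "p (j+2) * z + (1 - p (j+2)) * v + \<epsilon> (j+2) \<le> x (j+5)"
    using rec[of "j+2", unfolded i] unfolding v_def z_def .
  have m5: "(1 - p (j+2)) * v = v - p (j+2) * v" by (simp add: algebra_simps)
  have r5: "p (j+2) * z + v - p (j+2) * v + \<epsilon> (j+2) \<le> x (j+5)"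
    using r5' m5 by linarith
  have c1: "p (j+2) * L4 \<le> p (j+2) * z" by (rule mult_left_mono) (use x4 p2 in \<open>auto simp: L4_def z_def\<close>)
  have c2: "L4 - p (j+2) * L4 \<le> v - p (j+2) * v"
    using mult_left_mono[of L4 v "1 - p (j+2)"] vL4 p2 by (simp add: algebra_simps)
  have x5: "L4 - \<bar>\<epsilon> (j+2)\<bar> \<le> x (j+5)"
    using r5 c1 c2 ea[of "j+2"] by linarith
  have Eg: "\<bar>\<epsilon> j\<bar> \<le> E" "\<bar>\<epsilon> j\<bar> + \<bar>\<epsilon> (j+1)\<bar> \<le> E" "L4 - \<bar>\<epsilon> (j+2)\<bar> = lo + D/4 - E"
    unfolding E_def L4_def by auto
  have q: "D/4 \<le> D/2" using D0 by simp
  show "lo + (x (j+2) - lo)/4 - E \<le> x (j+3)" using x3 Eg q unfolding D_def v_def by linarith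
  show "lo + (x (j+2) - lo)/4 - E \<le> x (j+4)" using x4 Eg unfolding D_def v_def by linarith
  show "lo + (x (j+2) - lo)/4 - E \<le> x (j+5)" using x5 Eg unfolding D_def v_def by linarith
qed

lemma real_conv:
  fixes x \<epsilon> p :: "nat \<Rightarrow> real"
  assumes rec: "\<And>j. x (j+3) = p j * x (j+2) + (1 - p j) * x j + \<epsilon> j"
    and pb: "\<And>j. 1/2 \<le> p j \<and> p j \<le> 1"
    and se: "summable (\<lambda>j. \<bar>\<epsilon> j\<bar>)"
    and bd: "\<And>j. \<bar>x j\<bar> \<le> B"
  shows "convergent x"
proof -
  define Mx where "Mx j = max (x j) (max (x (j+1)) (x (j+2)))" for j
  define mn where "mn j = min (x j) (min (x (j+1)) (x (j+2)))" for j
  define E where "E j = \<bar>\<epsilon> j\<bar> + \<bar>\<epsilon> (j+1)\<bar> + \<bar>\<epsilon> (j+2)\<bar>" for j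
  define T where "T j = (\<Sum>i. \<bar>\<epsilon> (i + j)\<bar>)" for j
  have Mx_ge: "x j \<le> Mx j" "x (j+1) \<le> Mx j" "x (j+2) \<le> Mx j" for j unfolding Mx_def by auto
  have mn_le: "mn j \<le> x j" "mn j \<le> x (j+1)" "mn j \<le> x (j+2)" for j unfolding mn_def by auto
  have Mx_Suc: "Mx (Suc j) = max (x (j+1)) (max (x (j+2)) (x (j+3)))" for j unfolding Mx_def by (simp add: eval_nat_numeral)
  have mn_Suc: "mn (Suc j) = min (x (j+1)) (min (x (j+2)) (x (j+3)))" for j unfolding mn_def by (simp add: eval_nat_numeral)
  have x3_up: "x (j+3) \<le> Mx j + \<bar>\<epsilon> j\<bar>" for j
  proof -
    have p: "1/2 \<le> p j" "p j \<le> 1" using pb[of j] by auto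
    have a: "p j * x (j+2) \<le> p j * Mx j" by (rule mult_left_mono) (use Mx_ge p in auto)
    have b: "(1 - p j) * x j \<le> (1 - p j) * Mx j" by (rule mult_left_mono) (use Mx_ge p in auto)
    have c: "p j * Mx j + (1 - p j) * Mx j = Mx j" by (simp add: algebra_simps)
    have d: "\<epsilon> j \<le> \<bar>\<epsilon> j\<bar>" by simp
    show ?thesis using rec[of j] a b c d by linarith
  qed
  have x3_lo: "mn j - \<bar>\<epsilon> j\<bar> \<le> x (j+3)" for j
  proof -
    have p: "1/2 \<le> p j" "p j \<le> 1" using pb[of j] by auto
    have a: "p j * mn j \<le> p j * x (j+2)" by (rule mult_left_mono) (use mn_le p in auto)
    have b: "(1 - p j) * mn j \<le> (1 - p j) * x j" by (rule mult_left_mono) (use mn_le p in auto)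
    have c: "p j * mn j + (1 - p j) * mn j = mn j" by (simp add: algebra_simps)
    have d: "- \<bar>\<epsilon> j\<bar> \<le> \<epsilon> j" by simp
    show ?thesis using rec[of j] a b c d by linarith
  qed
  have Mx_step: "Mx (Suc j) \<le> Mx j + \<bar>\<epsilon> j\<bar>" for j
    using Mx_Suc[of j] Mx_ge[of j] x3_up[of j] abs_ge_zero[of "\<epsilon> j"] by linarith
  have mn_step: "mn j - \<bar>\<epsilon> j\<bar> \<le> mn (Suc j)" for j
    using mn_Suc[of j] mn_le[of j] x3_lo[of j] abs_ge_zero[of "\<epsilon> j"] by linarith
  have sshift: "summable (\<lambda>i. \<bar>\<epsilon> (i + j)\<bar>)" for j using se by (subst summable_iff_shift)
  have T_split: "T j = \<bar>\<epsilon> j\<bar> + T (Suc j)" for j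
  proof -
    have "(\<Sum>i. \<bar>\<epsilon> (Suc i + j)\<bar>) = (\<Sum>i. \<bar>\<epsilon> (i + j)\<bar>) - \<bar>\<epsilon> (0 + j)\<bar>"
      by (rule suminf_split_head[OF sshift[of j]])
    then show ?thesis unfolding T_def by simp
  qed
  have T_nonneg: "T j \<ge> 0" for j unfolding T_def by (intro suminf_nonneg sshift) auto
  have T_lim: "T \<longlonglongrightarrow> 0" unfolding T_def by (rule suminf_exist_split2[OF se, simplified])
  have "decseq (\<lambda>j. Mx j + T j)"
    by (rule decseq_SucI) (use Mx_step T_split in \<open>smt (verit)\<close>)
  moreover have "\<forall>j. -B \<le> Mx j + T j" using Mx_ge bd T_nonneg by (smt (verit) abs_le_D2)
  ultimately obtain A where A: "(\<lambda>j. Mx j + T j) \<longlonglongrightarrow> A" by (rule decseq_convergent)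
  have MxA: "Mx \<longlonglongrightarrow> A" using tendsto_diff[OF A T_lim] by simp
  have "incseq (\<lambda>j. mn j - T j)"
    by (rule incseq_SucI) (use mn_step T_split in \<open>smt (verit)\<close>)
  moreover have "\<forall>j. mn j - T j \<le> B" using mn_le bd T_nonneg by (smt (verit) abs_le_D1)
  ultimately obtain A' where A': "(\<lambda>j. mn j - T j) \<longlonglongrightarrow> A'" by (rule incseq_convergent)
  have mnA: "mn \<longlonglongrightarrow> A'" using tendsto_add[OF A' T_lim] by simp
  have elim: "(\<lambda>j. \<bar>\<epsilon> j\<bar>) \<longlonglongrightarrow> 0" by (rule summable_LIMSEQ_zero[OF se])
  have Elim: "E \<longlonglongrightarrow> 0"
  proof -
    have l1: "(\<lambda>j. \<bar>\<epsilon> (j+1)\<bar>) \<longlonglongrightarrow> 0" using LIMSEQ_Suc[OF elim] by simp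
    have l2: "(\<lambda>j. \<bar>\<epsilon> (j+2)\<bar>) \<longlonglongrightarrow> 0" using LIMSEQ_Suc[OF LIMSEQ_Suc[OF elim]] by (simp add: eval_nat_numeral)
    show ?thesis unfolding E_def using tendsto_add[OF tendsto_add[OF elim l1] l2] by simp
  qed
  have spread: "Mx (j+3) - mn (j+3) \<le> 3/4 * (Mx j - mn j) + 2 * E j" for j
  proof -
    have recle: "\<And>j. p j * x (j+2) + (1 - p j) * x j + \<epsilon> j \<le> x (j+3)" using rec by simp
    note L = lower3[of p x \<epsilon> "mn j" j, OF recle pb mn_le[of j]]
    have recn: "\<And>j. p j * (- x (j+2)) + (1 - p j) * (- x j) + (- \<epsilon> j) \<le> - x (j+3)"
      using rec by (simp add: algebra_simps)
    have hn: "- Mx j \<le> - x j" "- Mx j \<le> - x (j+1)" "- Mx j \<le> - x (j+2)" using Mx_ge[of j] by auto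
    note U = lower3[of p "\<lambda>j. - x j" "\<lambda>j. - \<epsilon> j" "- Mx j" j, OF recn pb hn]
    have e1: "\<bar>- \<epsilon> i\<bar> = \<bar>\<epsilon> i\<bar>" for i by simp
    have mn3: "mn (j+3) = min (x (j+3)) (min (x (j+4)) (x (j+5)))" unfolding mn_def by (simp add: eval_nat_numeral)
    have Mx3: "Mx (j+3) = max (x (j+3)) (max (x (j+4)) (x (j+5)))" unfolding Mx_def by (simp add: eval_nat_numeral)
    define v where "v = x (j+2)"
    have lo3: "mn j + (v - mn j)/4 - E j \<le> mn (j+3)" using L unfolding mn3 E_def v_def by simp
    have hi3: "Mx (j+3) \<le> Mx j - (Mx j - v)/4 + E j" using U unfolding Mx3 E_def v_def e1 by simp
    have "(Mx j - (Mx j - v)/4 + E j) - (mn j + (v - mn j)/4 - E j) = 3/4 * (Mx j - mn j) + 2 * E j"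
      by (simp add: field_simps)
    then show ?thesis using lo3 hi3 by linarith
  qed
  have l3: "(\<lambda>j. Mx (j+3) - mn (j+3)) \<longlonglongrightarrow> A - A'"
    using LIMSEQ_ignore_initial_segment[OF tendsto_diff[OF MxA mnA], of 3] by simp
  have r3: "(\<lambda>j. 3/4 * (Mx j - mn j) + 2 * E j) \<longlonglongrightarrow> 3/4 * (A - A') + 2 * 0"
    by (intro tendsto_intros MxA mnA Elim)
  have "A - A' \<le> 3/4 * (A - A') + 2 * 0" by (rule LIMSEQ_le[OF l3 r3]) (use spread in auto)
  moreover have "A' \<le> A" by (rule LIMSEQ_le[OF mnA MxA]) (use mn_le(1) Mx_ge(1) in \<open>metis order_trans\<close>)
  ultimately have AA: "A' = A" by simp
  have "x \<longlonglongrightarrow> A"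
    by (rule tendsto_sandwich[of mn x sequentially Mx A]) (use mn_le Mx_ge mnA AA MxA in auto)
  then show ?thesis unfolding convergent_def by blast
qed

lemma upper3:
  fixes y p :: "nat \<Rightarrow> real"
  assumes rec: "\<And>j. y (j+3) \<le> p j * y (j+2) + (1 - p j) * y j"
    and pb: "\<And>j. 1/2 \<le> p j \<and> p j \<le> 1"
    and hi: "y j \<le> M" "y (j+1) \<le> M" "y (j+2) \<le> M"
  shows "y (j+3) \<le> M - (M - y (j+2))/4" "y (j+4) \<le> M - (M - y (j+2))/4" "y (j+5) \<le> M - (M - y (j+2))/4"
proof -
  have recx: "p j * (- y (j+2)) + (1 - p j) * (- y j) + (\<lambda>_. 0::real) j \<le> - y (j+3)" for j
    using rec[of j] by (simp add: algebra_simps)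
  have lo: "- M \<le> - y j" "- M \<le> - y (j+1)" "- M \<le> - y (j+2)" using hi by auto
  note L = lower3[of p "\<lambda>j. - y j" "\<lambda>_. 0" "-M" j, OF recx pb lo]
  have e: "-M + (- y (j+2) - (-M))/4 = - (M - (M - y (j+2))/4)" by (simp add: field_simps)
  show "y (j+3) \<le> M - (M - y (j+2))/4" "y (j+4) \<le> M - (M - y (j+2))/4" "y (j+5) \<le> M - (M - y (j+2))/4"
    using L unfolding e by simp_all
qed

lemma norm_convex_identity:
  fixes a b :: complex and p :: real
  shows "(norm (of_real p * a + of_real (1 - p) * b))^2 = p * (norm a)^2 + (1 - p) * (norm b)^2 - p * (1 - p) * (norm (a - b))^2"
  unfolding cmod_power2 by (simp add: power2_eq_square algebra_simps)

lemma complex_conv: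
  fixes c w :: "nat \<Rightarrow> complex" and p :: "nat \<Rightarrow> real"
  assumes rec: "\<And>j. c (j+3) = of_real (p j) * c (j+2) + of_real (1 - p j) * (w j * c j)"
    and pb: "\<And>j. 1/2 \<le> p j \<and> p j \<le> 7/8"
    and wn: "\<And>j. norm (w j) = 1"
    and cb: "\<And>j. norm (c j) \<le> 1"
    and pis: "w \<longlonglongrightarrow> 1 \<Longrightarrow> summable (\<lambda>j. norm (w j - 1))"
  shows "convergent c"
proof -
  have pb1: "1/2 \<le> p j \<and> p j \<le> 1" for j using pb[of j] by auto
  define n where "n j = norm (c j)" for j
  have n3: "n (j+3) \<le> p j * n (j+2) + (1 - p j) * n j" for j
  proof -
    have "n (j+3) \<le> norm (of_real (p j) * c (j+2)) + norm (of_real (1 - p j) * (w j * c j))"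
      unfolding n_def rec[of j] by (rule norm_triangle_ineq)
    also have "\<dots> = p j * n (j+2) + (1 - p j) * n j"
      using pb[of j] wn[of j] unfolding n_def by (simp add: norm_mult del: of_real_diff)
    finally show ?thesis .
  qed
  define Mn where "Mn j = max (n j) (max (n (j+1)) (n (j+2)))" for j
  have Mn_ge: "n j \<le> Mn j" "n (j+1) \<le> Mn j" "n (j+2) \<le> Mn j" for j unfolding Mn_def by auto
  have Mn_nonneg: "0 \<le> Mn j" for j using Mn_ge(1)[of j] unfolding n_def by (meson norm_ge_zero order_trans)
  note U = upper3[of n p, OF n3 pb1]
  have Mn_Suc: "Mn (Suc j) = max (n (j+1)) (max (n (j+2)) (n (j+3)))" for j unfolding Mn_def by (simp add: eval_nat_numeral)
  have Mn3: "Mn (j+3) = max (n (j+3)) (max (n (j+4)) (n (j+5)))" for j unfolding Mn_def by (simp add: eval_nat_numeral)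
  have Mn_dec: "Mn (Suc j) \<le> Mn j" for j
    using U(1)[OF Mn_ge[of j]] Mn_ge[of j] Mn_ge(3)[of j] unfolding Mn_Suc by (simp add: field_simps)
  have Mn_key: "Mn (j+3) \<le> Mn j - (Mn j - n (j+2))/4" for j
    using U[OF Mn_ge[of j]] unfolding Mn3 by simp
  have "decseq Mn" by (rule decseq_SucI) (rule Mn_dec)
  then obtain R where R: "Mn \<longlonglongrightarrow> R" "\<forall>j. R \<le> Mn j"
    using decseq_convergent[of Mn 0] Mn_nonneg by blast
  have R0: "R \<ge> 0" by (rule LIMSEQ_le_const[OF R(1)]) (use Mn_nonneg in auto)
  have n2lim: "(\<lambda>j. n (j+2)) \<longlonglongrightarrow> R"
  proof (rule tendsto_sandwich[of "\<lambda>j. Mn j - 4 * (Mn j - R)" _ _ Mn])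
    show "eventually (\<lambda>j. Mn j - 4 * (Mn j - R) \<le> n (j+2)) sequentially"
    proof (intro always_eventually allI)
      fix j
      have "R \<le> Mn (j+3)" using R(2) by blast
      then show "Mn j - 4 * (Mn j - R) \<le> n (j+2)" using Mn_key[of j] by (simp add: field_simps)
    qed
    show "eventually (\<lambda>j. n (j+2) \<le> Mn j) sequentially" using Mn_ge by auto
    show "(\<lambda>j. Mn j - 4 * (Mn j - R)) \<longlonglongrightarrow> R"
      using tendsto_diff[OF R(1) tendsto_mult[OF tendsto_const[of 4] tendsto_diff[OF R(1) tendsto_const[of R]]]] by simp
  qed (rule R(1))
  have nlim: "n \<longlonglongrightarrow> R" by (rule LIMSEQ_offset[OF n2lim])
  show ?thesis
  proof (cases "R = 0")
    case True
    then have "c \<longlonglongrightarrow> 0" using nlim unfolding n_def by (simp add: tendsto_norm_zero_iff)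
    then show ?thesis unfolding convergent_def by blast
  next
    case False
    then have Rpos: "R > 0" using R0 by simp
    define d where "d j = c (j+2) - w j * c j" for j
    have nwc: "norm (w j * c j) = n j" for j using wn[of j] unfolding n_def by (simp add: norm_mult)
    have ident: "p j * (1 - p j) * (norm (d j))^2 = p j * (n (j+2))^2 + (1 - p j) * (n j)^2 - (n (j+3))^2" for j
      using norm_convex_identity[of "p j" "c (j+2)" "w j * c j"] unfolding n_def rec[of j] d_def
      using nwc[of j] unfolding n_def by simp
    have pq: "1/16 \<le> p j * (1 - p j)" for j
    proof -
      have "1/2 * (1/8) \<le> p j * (1 - p j)" by (rule mult_mono) (use pb[of j] in auto)
      then show ?thesis by simp
    qed
    define G where "G j = \<bar>(n (j+2))^2 - R^2\<bar> + \<bar>(n j)^2 - R^2\<bar> + \<bar>(n (j+3))^2 - R^2\<bar>" for j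
    have sq: "(\<lambda>j. \<bar>(n j)^2 - R^2\<bar>) \<longlonglongrightarrow> 0"
    proof -
      have "(\<lambda>j. \<bar>(n j)^2 - R^2\<bar>) \<longlonglongrightarrow> \<bar>R^2 - R^2\<bar>" by (intro tendsto_intros nlim)
      then show ?thesis by simp
    qed
    have Glim: "G \<longlonglongrightarrow> 0"
    proof -
      have l2: "(\<lambda>j. \<bar>(n (j+2))^2 - R^2\<bar>) \<longlonglongrightarrow> 0" using LIMSEQ_ignore_initial_segment[OF sq, of 2] by simp
      have l3: "(\<lambda>j. \<bar>(n (j+3))^2 - R^2\<bar>) \<longlonglongrightarrow> 0" using LIMSEQ_ignore_initial_segment[OF sq, of 3] by simp
      show ?thesis unfolding G_def using tendsto_add[OF tendsto_add[OF l2 sq] l3] by simp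
    qed
    have dbound: "(norm (d j))^2 \<le> 16 * G j" for j
    proof -
      have p: "0 \<le> p j" "p j \<le> 1" using pb[of j] by auto
      have gen: "q * X \<le> \<bar>X\<bar>" if "0 \<le> q" "q \<le> 1" for q X :: real
      proof -
        have "q * X \<le> q * \<bar>X\<bar>" by (rule mult_left_mono) (use that in auto)
        also have "\<dots> \<le> \<bar>X\<bar>" by (rule mult_left_le_one_le) (use that in auto)
        finally show ?thesis .
      qed
      have a: "p j * ((n (j+2))^2 - R^2) \<le> \<bar>(n (j+2))^2 - R^2\<bar>" by (rule gen) (use p in auto)
      have b: "(1 - p j) * ((n j)^2 - R^2) \<le> \<bar>(n j)^2 - R^2\<bar>" by (rule gen) (use p in auto)
      have "p j * (1 - p j) * (norm (d j))^2 = p j * ((n (j+2))^2 - R^2) + (1 - p j) * ((n j)^2 - R^2) - ((n (j+3))^2 - R^2)"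
        unfolding ident by (simp add: algebra_simps)
      also have "\<dots> \<le> G j" unfolding G_def using a b by linarith
      finally have "p j * (1 - p j) * (norm (d j))^2 \<le> G j" .
      moreover have "1/16 * (norm (d j))^2 \<le> p j * (1 - p j) * (norm (d j))^2"
        by (rule mult_right_mono[OF pq]) simp
      ultimately show ?thesis by simp
    qed
    have dlim: "d \<longlonglongrightarrow> 0"
    proof -
      have "(\<lambda>j. sqrt (16 * G j)) \<longlonglongrightarrow> sqrt (16 * 0)" by (intro tendsto_intros Glim)
      then have s0: "(\<lambda>j. sqrt (16 * G j)) \<longlonglongrightarrow> 0" by simp
      show ?thesis
      proof (rule Lim_null_comparison[OF _ s0])
        show "eventually (\<lambda>j. norm (d j) \<le> sqrt (16 * G j)) sequentially"
          by (intro always_eventually allI real_le_rsqrt dbound)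
      qed
    qed
    have step: "c (j+3) - c (j+2) = - of_real (1 - p j) * d j" for j
      unfolding rec[of j] d_def by (simp add: algebra_simps)
    have s1: "(\<lambda>j. c (j+3) - c (j+2)) \<longlonglongrightarrow> 0"
    proof (rule Lim_null_comparison[OF _ tendsto_norm_zero[OF dlim]])
      show "eventually (\<lambda>j. norm (c (j+3) - c (j+2)) \<le> norm (d j)) sequentially"
      proof (intro always_eventually allI)
        fix j
        have "norm (c (j+3) - c (j+2)) = \<bar>1 - p j\<bar> * norm (d j)" unfolding step by (simp add: norm_mult del: of_real_diff)
        also have "\<dots> \<le> norm (d j)" using pb[of j] by (intro mult_left_le_one_le) auto
        finally show "norm (c (j+3) - c (j+2)) \<le> norm (d j)" .
      qed
    qed
    have s1': "(\<lambda>j. c (Suc j) - c j) \<longlonglongrightarrow> 0"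
    proof (rule LIMSEQ_offset[of _ 2])
      show "(\<lambda>j. c (Suc (j+2)) - c (j+2)) \<longlonglongrightarrow> 0" using s1 by (simp add: eval_nat_numeral)
    qed
    have s2: "(\<lambda>j. c (j+2) - c j) \<longlonglongrightarrow> 0"
    proof -
      have "(\<lambda>j. (c (Suc (Suc j)) - c (Suc j)) + (c (Suc j) - c j)) \<longlonglongrightarrow> 0 + 0"
        by (intro tendsto_add s1' LIMSEQ_Suc[OF s1'])
      then show ?thesis by (simp add: eval_nat_numeral)
    qed
    have wc: "(\<lambda>j. (w j - 1) * c j) \<longlonglongrightarrow> 0"
    proof -
      have "(\<lambda>j. (c (j+2) - c j) - d j) \<longlonglongrightarrow> 0 - 0" by (intro tendsto_diff s2 dlim)
      moreover have "(c (j+2) - c j) - d j = (w j - 1) * c j" for j unfolding d_def by (simp add: algebra_simps)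
      ultimately show ?thesis by simp
    qed
    have wlim: "w \<longlonglongrightarrow> 1"
    proof -
      have "(\<lambda>j. norm ((w j - 1) * c j) / n j) \<longlonglongrightarrow> 0 / R"
        by (intro tendsto_divide tendsto_norm_zero wc nlim) (use Rpos in auto)
      then have a: "(\<lambda>j. norm ((w j - 1) * c j) / n j) \<longlonglongrightarrow> 0" by simp
      have ev: "eventually (\<lambda>j. n j > 0) sequentially" using order_tendstoD(1)[OF nlim Rpos] .
      have "(\<lambda>j. norm (w j - 1)) \<longlonglongrightarrow> 0"
      proof (rule Lim_transform_eventually[OF a])
        show "eventually (\<lambda>j. norm ((w j - 1) * c j) / n j = norm (w j - 1)) sequentially"
          using ev by eventually_elim (simp add: norm_mult n_def)
      qed
      then have "(\<lambda>j. w j - 1) \<longlonglongrightarrow> 0" by (simp add: tendsto_norm_zero_iff)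
      then show ?thesis by (simp add: LIM_zero_iff)
    qed
    have sw: "summable (\<lambda>j. norm (w j - 1))" by (rule pis[OF wlim])
    define \<epsilon> where "\<epsilon> j = of_real (1 - p j) * ((w j - 1) * c j)" for j
    have rec': "c (j+3) = of_real (p j) * c (j+2) + of_real (1 - p j) * c j + \<epsilon> j" for j
      unfolding rec[of j] \<epsilon>_def by (simp add: algebra_simps)
    have \<epsilon>b: "norm (\<epsilon> j) \<le> norm (w j - 1)" for j
    proof -
      have "norm (\<epsilon> j) = \<bar>1 - p j\<bar> * (norm (w j - 1) * norm (c j))" unfolding \<epsilon>_def by (simp add: norm_mult del: of_real_diff)
      also have "\<dots> \<le> 1 * (norm (w j - 1) * 1)"
        by (intro mult_mono) (use pb[of j] cb[of j] in auto)
      finally show ?thesis by simp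
    qed
    have sRe: "summable (\<lambda>j. \<bar>Re (\<epsilon> j)\<bar>)"
    proof (rule summable_comparison_test'[OF sw, where N=0])
      fix j show "norm \<bar>Re (\<epsilon> j)\<bar> \<le> norm (w j - 1)" using abs_Re_le_cmod[of "\<epsilon> j"] \<epsilon>b[of j] by simp
    qed
    have sIm: "summable (\<lambda>j. \<bar>Im (\<epsilon> j)\<bar>)"
    proof (rule summable_comparison_test'[OF sw, where N=0])
      fix j show "norm \<bar>Im (\<epsilon> j)\<bar> \<le> norm (w j - 1)" using abs_Im_le_cmod[of "\<epsilon> j"] \<epsilon>b[of j] by simp
    qed
    have cRe: "convergent (\<lambda>j. Re (c j))"
    proof (rule real_conv[where p=p and \<epsilon>="\<lambda>j. Re (\<epsilon> j)" and B=1])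
      show "Re (c (j+3)) = p j * Re (c (j+2)) + (1 - p j) * Re (c j) + Re (\<epsilon> j)" for j
        using arg_cong[OF rec'[of j], of Re] by simp
      show "\<bar>Re (c j)\<bar> \<le> 1" for j using abs_Re_le_cmod[of "c j"] cb[of j] by linarith
    qed (use pb1 sRe in auto)
    have cIm: "convergent (\<lambda>j. Im (c j))"
    proof (rule real_conv[where p=p and \<epsilon>="\<lambda>j. Im (\<epsilon> j)" and B=1])
      show "Im (c (j+3)) = p j * Im (c (j+2)) + (1 - p j) * Im (c j) + Im (\<epsilon> j)" for j
        using arg_cong[OF rec'[of j], of Im] by simp
      show "\<bar>Im (c j)\<bar> \<le> 1" for j using abs_Im_le_cmod[of "c j"] cb[of j] by linarith
    qed (use pb1 sIm in auto)
    obtain a b where "(\<lambda>j. Re (c j)) \<longlonglongrightarrow> a" "(\<lambda>j. Im (c j)) \<longlonglongrightarrow> b"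
      using cRe cIm unfolding convergent_def by blast
    then have "(\<lambda>j. Complex (Re (c j)) (Im (c j))) \<longlonglongrightarrow> Complex a b" by (rule tendsto_Complex)
    then show ?thesis unfolding convergent_def by auto
  qed
qed

definition V :: "real \<Rightarrow> nat \<Rightarrow> complex" where "V t N = (\<Sum>n<N. cis (t * real (hg n)))"
definition wt :: "real \<Rightarrow> nat \<Rightarrow> complex" where "wt t j = cis (t * real (nar j))"
definition cc :: "real \<Rightarrow> nat \<Rightarrow> complex" where "cc t j = V t (nar j) / of_nat (nar j)"

lemma block_lt: assumes "r < nar j" shows "hg (nar (j+2) + r) = nar (j+1) + hg r"
proof (cases "j = 0")
  case True
  then have "r = 0" using assms by simp
  then show ?thesis using True by (simp add: nar_small)
next
  case False
  then show ?thesis using block_lemma[of j r] assms by simp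
qed

lemma V_add: "V t (a + s) = V t a + (\<Sum>r<s. cis (t * real (hg (a + r))))"
  by (induction s) (simp_all add: V_def)

lemma V_split:
  assumes "s \<le> nar j"
  shows "V t (nar (j+2) + s) = V t (nar (j+2)) + wt t (j+1) * V t s"
proof -
  have "(\<Sum>r<s. cis (t * real (hg (nar (j+2) + r)))) = (\<Sum>r<s. wt t (j+1) * cis (t * real (hg r)))"
  proof (rule sum.cong[OF refl])
    fix r assume "r \<in> {..<s}"
    then have "r < nar j" using assms by simp
    then have "hg (nar (j+2) + r) = nar (j+1) + hg r" by (rule block_lt)
    then show "cis (t * real (hg (nar (j+2) + r))) = wt t (j+1) * cis (t * real (hg r))"
      by (simp add: wt_def cis_mult distrib_left)
  qed
  then show ?thesis unfolding V_add by (simp add: V_def sum_distrib_left)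
qed

lemma V_rec: "V t (nar (j+3)) = V t (nar (j+2)) + wt t (j+1) * V t (nar j)"
  using V_split[of "nar j" j t] nar_rec[of j] by simp

lemma norm_V: "norm (V t N) \<le> real N"
proof -
  have "norm (V t N) \<le> (\<Sum>n<N. norm (cis (t * real (hg n))))" unfolding V_def by (rule norm_sum)
  then show ?thesis by simp
qed

lemma norm_wt[simp]: "norm (wt t j) = 1" by (simp add: wt_def)

lemma nar_le2: "nar (Suc k) \<le> 2 * nar k"
proof (cases "k \<ge> 2")
  case True
  then obtain m where m: "k = m + 2" by (metis add.commute le_add_diff_inverse)
  have "nar (Suc k) = nar (m+3)" using m by (simp add: eval_nat_numeral)
  also have "\<dots> = nar (m+2) + nar m" by (rule nar_rec)
  also have "\<dots> \<le> 2 * nar (m+2)" using nar_mono[of m "m+2"] by simp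
  finally show ?thesis using m by (simp add: eval_nat_numeral)
next
  case False
  then have "k = 0 \<or> k = 1" by auto
  then show ?thesis by (auto simp: nar_small)
qed

lemma nar_pos_real: "real (nar k) > 0" using nar_pos[of k] by simp

lemma cc_rec:
  "cc t (j+3) = of_real (real (nar (j+2)) / real (nar (j+3))) * cc t (j+2)
     + of_real (1 - real (nar (j+2)) / real (nar (j+3))) * (wt t (j+1) * cc t j)"
proof -
  have r: "real (nar (j+3)) = real (nar (j+2)) + real (nar j)" using nar_rec[of j] by simp
  have one: "1 - real (nar (j+2)) / real (nar (j+3)) = real (nar j) / real (nar (j+3))"
    using r nar_pos_real[of "j+3"] by (simp add: field_simps)
  have n2: "of_nat (nar (j+2)) \<noteq> (0::complex)" "of_nat (nar j) \<noteq> (0::complex)" "of_nat (nar (j+3)) \<noteq> (0::complex)"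
    using nar_pos[of "j+2"] nar_pos[of j] nar_pos[of "j+3"] by auto
  show ?thesis unfolding one cc_def V_rec using n2
    by (simp add: field_simps)
qed

lemma p_bounds: "1/2 \<le> real (nar (j+2)) / real (nar (j+3)) \<and> real (nar (j+2)) / real (nar (j+3)) \<le> 7/8"
proof -
  have a: "nar (j+3) \<le> 2 * nar (j+2)" using nar_le2[of "j+2"] by (simp add: eval_nat_numeral)
  have b1: "nar (j+1) \<le> 2 * nar j" using nar_le2[of j] by simp
  have b2: "nar (j+2) \<le> 2 * nar (j+1)" using nar_le2[of "j+1"] by (simp add: eval_nat_numeral)
  have r: "nar (j+3) = nar (j+2) + nar j" by (rule nar_rec)
  have b: "8 * nar (j+2) \<le> 7 * nar (j+3)" using b1 b2 r by linarith
  have pos: "real (nar (j+3)) > 0" by (rule nar_pos_real)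
  show ?thesis using a b pos by (simp add: field_simps)
qed

lemma norm_cc: "norm (cc t j) \<le> 1"
  using norm_V[of t "nar j"] nar_pos_real[of j] by (simp add: cc_def norm_divide)

lemma cc_convergent: "convergent (cc t)"
proof (rule complex_conv[where w="\<lambda>j. wt t (j+1)" and p="\<lambda>j. real (nar (j+2)) / real (nar (j+3))"])
  show "cc t (j+3) = of_real (real (nar (j+2)) / real (nar (j+3))) * cc t (j+2)
     + of_real (1 - real (nar (j+2)) / real (nar (j+3))) * (wt t (j+1) * cc t j)" for j
    by (rule cc_rec)
  show "1/2 \<le> real (nar (j+2)) / real (nar (j+3)) \<and> real (nar (j+2)) / real (nar (j+3)) \<le> 7/8" for j
    by (rule p_bounds)
  show "norm (wt t (j+1)) = 1" for j by simp
  show "norm (cc t j) \<le> 1" for j by (rule norm_cc)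
  assume "(\<lambda>j. wt t (j+1)) \<longlonglongrightarrow> 1"
  then have "wt t \<longlonglongrightarrow> 1" by (rule LIMSEQ_offset)
  then have "summable (\<lambda>j. norm (wt t j - 1))" unfolding wt_def by (rule pisot)
  then show "summable (\<lambda>j. norm (wt t (j+1) - 1))" by (subst summable_iff_shift)
qed

lemma exists_block: "N \<ge> 1 \<Longrightarrow> \<exists>j. nar (j+2) \<le> N \<and> N < nar (j+3)"
proof (induction N)
  case 0 then show ?case by simp
next
  case (Suc N)
  show ?case
  proof (cases "N = 0")
    case True then show ?thesis by (intro exI[of _ 0]) (simp add: nar_small)
  next
    case False
    then obtain j where j: "nar (j+2) \<le> N" "N < nar (j+3)" using Suc.IH by auto
    show ?thesis
    proof (cases "Suc N < nar (j+3)")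
      case True then show ?thesis using j by (intro exI[of _ j]) simp
    next
      case False
      then have e: "Suc N = nar (j+3)" using j by simp
      have "nar (j+3) < nar (j+4)" using nar_rec[of "j+1"] nar_pos[of "j+1"] by (simp add: eval_nat_numeral)
      then show ?thesis using e by (intro exI[of _ "j+1"]) (simp add: eval_nat_numeral)
    qed
  qed
qed

lemma nar_le8: "nar (j+3) \<le> 8 * nar j"
proof -
  have "nar (j+3) \<le> 2 * nar (j+2)" using nar_le2[of "j+2"] by (simp add: eval_nat_numeral)
  moreover have "nar (j+2) \<le> 2 * nar (j+1)" using nar_le2[of "j+1"] by (simp add: eval_nat_numeral)
  moreover have "nar (j+1) \<le> 2 * nar j" using nar_le2[of j] by simp
  ultimately show ?thesis by linarith
qed

lemma V_cc: "V t (nar j) = cc t j * of_nat (nar j)"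
  using nar_pos[of j] by (simp add: cc_def)

lemma avg_conv:
  assumes lim: "cc t \<longlonglongrightarrow> L"
  shows "(\<lambda>N. V t N / of_nat N) \<longlonglongrightarrow> L"
proof -
  have Lb: "norm L \<le> 1"
    by (rule LIMSEQ_le_const2[OF tendsto_norm[OF lim]]) (use norm_cc in auto)
  have l0: "(\<lambda>j. norm (cc t j - L)) \<longlonglongrightarrow> 0" using lim by (simp add: LIM_zero_iff tendsto_norm_zero)
  have l2: "(\<lambda>j. norm (cc t (j+2) - L)) \<longlonglongrightarrow> 0" using LIMSEQ_ignore_initial_segment[OF l0, of 2] by simp
  have l3: "(\<lambda>j. norm (cc t (j+3) - L)) \<longlonglongrightarrow> 0" using LIMSEQ_ignore_initial_segment[OF l0, of 3] by simp
  have wL: "(\<lambda>j. norm (wt t (j+1) - 1) * norm L) \<longlonglongrightarrow> 0"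
  proof (rule Lim_null_comparison)
    show "(\<lambda>j. norm (cc t j - L) + 8 * norm (cc t (j+3) - L) + 4 * norm (cc t (j+2) - L)) \<longlonglongrightarrow> 0"
      using tendsto_add[OF tendsto_add[OF l0 tendsto_mult[OF tendsto_const[of 8] l3]] tendsto_mult[OF tendsto_const[of 4] l2]]
      by simp
    show "eventually (\<lambda>j. norm (norm (wt t (j+1) - 1) * norm L) \<le>
            norm (cc t j - L) + 8 * norm (cc t (j+3) - L) + 4 * norm (cc t (j+2) - L)) sequentially"
    proof (intro always_eventually allI)
      fix j
      define a where "a = real (nar j)"
      define a2 where "a2 = real (nar (j+2))"
      define a3 where "a3 = real (nar (j+3))"
      have apos: "a > 0" unfolding a_def by (rule nar_pos_real)
      have a3e: "a3 = a2 + a" unfolding a_def a2_def a3_def using nar_rec[of j] by simp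
      have a38: "a3 \<le> 8 * a" unfolding a_def a3_def using nar_le8[of j] by simp
      have a24: "a2 \<le> 4 * a"
      proof -
        have "nar (j+2) \<le> 2 * nar (j+1)" using nar_le2[of "j+1"] by (simp add: eval_nat_numeral)
        moreover have "nar (j+1) \<le> 2 * nar j" using nar_le2[of j] by simp
        ultimately show ?thesis unfolding a_def a2_def by simp
      qed
      have rec: "cc t (j+3) * of_real a3 = cc t (j+2) * of_real a2 + wt t (j+1) * (cc t j * of_real a)"
        using V_rec[of t j] unfolding V_cc a_def a2_def a3_def by simp
      have id: "(wt t (j+1) * cc t j - L) * of_real a = (cc t (j+3) - L) * of_real a3 - (cc t (j+2) - L) * of_real a2"
        using rec a3e by (simp add: algebra_simps)
      have "norm (wt t (j+1) * cc t j - L) * a \<le> norm (cc t (j+3) - L) * a3 + norm (cc t (j+2) - L) * a2"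
      proof -
        have "norm ((wt t (j+1) * cc t j - L) * of_real a) \<le> norm ((cc t (j+3) - L) * of_real a3) + norm ((cc t (j+2) - L) * of_real a2)"
          unfolding id by (rule norm_triangle_ineq4)
        moreover have "a2 \<ge> 0" "a3 \<ge> 0" unfolding a2_def a3_def by simp_all
        ultimately show ?thesis using apos by (simp add: norm_mult abs_of_nonneg)
      qed
      also have "\<dots> \<le> norm (cc t (j+3) - L) * (8 * a) + norm (cc t (j+2) - L) * (4 * a)"
        by (intro add_mono mult_left_mono a38 a24) auto
      finally have "norm (wt t (j+1) * cc t j - L) * a \<le> (8 * norm (cc t (j+3) - L) + 4 * norm (cc t (j+2) - L)) * a"
        by (simp add: algebra_simps)
      then have b1: "norm (wt t (j+1) * cc t j - L) \<le> 8 * norm (cc t (j+3) - L) + 4 * norm (cc t (j+2) - L)"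
        using apos by simp
      have "norm (wt t (j+1) - 1) * norm L = norm (wt t (j+1) * (L - cc t j) + (wt t (j+1) * cc t j - L))"
        by (simp add: norm_mult[symmetric] algebra_simps)
      also have "\<dots> \<le> norm (wt t (j+1) * (L - cc t j)) + norm (wt t (j+1) * cc t j - L)" by (rule norm_triangle_ineq)
      also have "norm (wt t (j+1) * (L - cc t j)) = norm (cc t j - L)" by (simp add: norm_mult norm_minus_commute)
      finally show "norm (norm (wt t (j+1) - 1) * norm L) \<le>
            norm (cc t j - L) + 8 * norm (cc t (j+3) - L) + 4 * norm (cc t (j+2) - L)" using b1 by simp
    qed
  qed
  have main: "\<exists>C. \<forall>N. norm (V t N - of_nat N * L) \<le> 3 * \<epsilon> * real N + C" if eps: "\<epsilon> > 0" for \<epsilon>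
  proof -
    obtain J1 where J1: "\<And>j. j \<ge> J1 \<Longrightarrow> norm (cc t j - L) \<le> \<epsilon>"
      using tendstoD[OF l0 eps] unfolding eventually_sequentially by (auto intro: less_imp_le)
    obtain J2 where J2: "\<And>j. j \<ge> J2 \<Longrightarrow> norm (wt t (j+1) - 1) * norm L \<le> \<epsilon>"
      using tendstoD[OF wL eps] unfolding eventually_sequentially by (auto intro: less_imp_le)
    define J where "J = max J1 J2"
    define C where "C = 2 * real (nar (J+2))"
    have "norm (V t N - of_nat N * L) \<le> 3 * \<epsilon> * real N + C" for N
    proof (induction N rule: less_induct)
      case (less N)
      show ?case
      proof (cases "N < nar (J+2)")
        case True
        have "norm (V t N - of_nat N * L) \<le> norm (V t N) + norm (of_nat N * L)" by (rule norm_triangle_ineq4)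
        also have "\<dots> \<le> real N + real N * 1" using norm_V[of t N] Lb mult_left_mono[OF Lb, of "real N"] by (intro add_mono) (auto simp: norm_mult)
        also have "\<dots> \<le> C" using True unfolding C_def by simp
        moreover have "0 \<le> 3 * \<epsilon> * real N" using eps by simp
        ultimately show ?thesis by linarith
      next
        case False
        then have N1: "N \<ge> 1" using nar_pos[of "J+2"] by simp
        obtain j where j: "nar (j+2) \<le> N" "N < nar (j+3)" using exists_block[OF N1] by blast
        have jJ: "j \<ge> J"
        proof (rule ccontr)
          assume "\<not> j \<ge> J"
          then have "nar (j+3) \<le> nar (J+2)" by (intro nar_mono) simp
          then show False using j False by simp
        qed
        define s where "s = N - nar (j+2)"
        have Ns: "N = nar (j+2) + s" unfolding s_def using j by simp
        have snar: "s \<le> nar j" using j nar_rec[of j] unfolding s_def by simp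
        have sN: "s < N" using Ns nar_pos[of "j+2"] by simp
        have s2: "s \<le> nar (j+2)" using snar nar_mono[of j "j+2"] by simp
        have IH: "norm (V t s - of_nat s * L) \<le> 3 * \<epsilon> * real s + C" by (rule less.IH[OF sN])
        have c2: "norm (cc t (j+2) - L) \<le> \<epsilon>" using J1 jJ unfolding J_def by simp
        have w2: "norm (wt t (j+1) - 1) * norm L \<le> \<epsilon>" using J2 jJ unfolding J_def by simp
        have decomp: "V t N - of_nat N * L = (cc t (j+2) - L) * of_nat (nar (j+2))
            + wt t (j+1) * (V t s - of_nat s * L) + (wt t (j+1) - 1) * L * of_nat s"
          unfolding Ns V_split[OF snar] V_cc by (simp add: algebra_simps)
        have "norm (V t N - of_nat N * L) \<le> norm ((cc t (j+2) - L) * of_nat (nar (j+2)))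
            + norm (wt t (j+1) * (V t s - of_nat s * L)) + norm ((wt t (j+1) - 1) * L * of_nat s)"
          unfolding decomp by (rule order_trans[OF norm_triangle_ineq add_mono[OF norm_triangle_ineq order_refl]])
        also have "\<dots> = norm (cc t (j+2) - L) * real (nar (j+2)) + norm (V t s - of_nat s * L)
            + (norm (wt t (j+1) - 1) * norm L) * real s"
          by (simp add: norm_mult)
        also have "\<dots> \<le> \<epsilon> * real (nar (j+2)) + (3 * \<epsilon> * real s + C) + \<epsilon> * real s"
          by (intro add_mono mult_right_mono c2 w2 IH) auto
        also have "\<dots> \<le> 3 * \<epsilon> * real N + C"
        proof -
          have "\<epsilon> * real s \<le> \<epsilon> * real (nar (j+2))" using s2 eps by (intro mult_left_mono) auto
          moreover have "0 \<le> \<epsilon> * real (nar (j+2))" using eps by simp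
          ultimately have h: "\<epsilon> * real s \<le> 2 * (\<epsilon> * real (nar (j+2)))" by linarith
          show ?thesis unfolding Ns using h by (simp add: algebra_simps)
        qed
        finally show ?thesis .
      qed
    qed
    then show ?thesis by blast
  qed
  show ?thesis
  proof (rule tendstoI)
    fix e :: real assume e: "e > 0"
    define \<epsilon> where "\<epsilon> = e / 4"
    have \<epsilon>: "\<epsilon> > 0" using e unfolding \<epsilon>_def by simp
    obtain C where C: "\<And>N. norm (V t N - of_nat N * L) \<le> 3 * \<epsilon> * real N + C" using main[OF \<epsilon>] by blast
    have C0: "C \<ge> 0" using C[of 0] by (simp add: V_def)
    define N0 where "N0 = nat \<lceil>C / \<epsilon>\<rceil> + 1"
    show "eventually (\<lambda>N. dist (V t N / of_nat N) L < e) sequentially"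
    proof (rule eventually_sequentiallyI[of N0])
      fix N assume N: "N \<ge> N0"
      have Npos: "real N > 0" using N unfolding N0_def by simp
      have NC: "C / \<epsilon> < real N" using N unfolding N0_def by linarith
      then have NC': "C < \<epsilon> * real N" using \<epsilon> by (simp add: field_simps)
      have "dist (V t N / of_nat N) L = norm (V t N - of_nat N * L) / real N"
        using Npos by (simp add: dist_norm field_simps norm_divide)
      also have "\<dots> \<le> (3 * \<epsilon> * real N + C) / real N" by (rule divide_right_mono[OF C]) simp
      also have "\<dots> < (4 * \<epsilon> * real N) / real N" using NC' Npos by (intro divide_strict_right_mono) auto
      also have "\<dots> = e" using Npos unfolding \<epsilon>_def by simp
      finally show "dist (V t N / of_nat N) L < e" .
    qed
  qed
qed

lemma sum_hofH_V: "(\<Sum>n=1..N. cis (t * real (hofH n))) = V t (Suc N) - 1"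
proof (induction N)
  case 0 then show ?case by (simp add: V_def)
next
  case (Suc N)
  have "hg (Suc N) = hofH (Suc N)" by (simp add: hg_def)
  then show ?case using Suc by (simp add: V_def)
qed

lemma char_avg_conv: "convergent (\<lambda>N. (\<Sum>n=1..N. cis (t * real (hofH n))) / of_nat N)"
proof -
  obtain L where L: "cc t \<longlonglongrightarrow> L" using cc_convergent[of t] unfolding convergent_def by blast
  have a: "(\<lambda>N. V t N / of_nat N) \<longlonglongrightarrow> L" by (rule avg_conv[OF L])
  have b: "(\<lambda>N. V t (Suc N) / of_nat (Suc N)) \<longlonglongrightarrow> L" by (rule LIMSEQ_Suc[OF a])
  define A where "A N = V t (Suc N) / of_nat (Suc N) * (of_nat (Suc N) / of_nat N) - 1 / of_nat N" for N
  have c: "A \<longlonglongrightarrow> L * 1 - 0" unfolding A_def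
    by (intro tendsto_intros b LIMSEQ_Suc_n_over_n lim_inverse_n' tendsto_of_real)
  have c': "A \<longlonglongrightarrow> L" using c by simp
  have "(\<lambda>N. (\<Sum>n=1..N. cis (t * real (hofH n))) / of_nat N) \<longlonglongrightarrow> L"
  proof (rule Lim_transform_eventually[OF c'])
    show "eventually (\<lambda>N. A N = (\<Sum>n=1..N. cis (t * real (hofH n))) / of_nat N) sequentially"
    proof (rule eventually_sequentiallyI[of 1])
      fix N :: nat assume "N \<ge> 1"
      then have "(of_nat N :: complex) \<noteq> 0" by simp
      moreover have "(of_nat (Suc N) :: complex) \<noteq> 0" by (rule of_nat_neq_0)
      ultimately show "A N = (\<Sum>n=1..N. cis (t * real (hofH n))) / of_nat N"
        unfolding sum_hofH_V A_def by (simp add: field_simps del: of_nat_Suc)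
    qed
  qed
  then show ?thesis unfolding convergent_def by blast
qed

definition tp :: "(int \<times> complex) list \<Rightarrow> real \<Rightarrow> complex" where
  "tp L x = (\<Sum>(k,a)\<leftarrow>L. a * cis (2 * pi * real_of_int k * x))"

definition prodl :: "(int \<times> complex) list \<Rightarrow> (int \<times> complex) list \<Rightarrow> (int \<times> complex) list" where
  "prodl L1 L2 = concat (map (\<lambda>(k,a). map (\<lambda>(l,b). (k+l, a*b)) L2) L1)"

lemma tp_Nil[simp]: "tp [] x = 0" by (simp add: tp_def)
lemma tp_Cons[simp]: "tp ((k,a) # L) x = a * cis (2 * pi * real_of_int k * x) + tp L x" by (simp add: tp_def)
lemma tp_append: "tp (L1 @ L2) x = tp L1 x + tp L2 x" by (simp add: tp_def)

lemma tp_map: "tp (map (\<lambda>(l,b). (k+l, a*b)) L2) x = a * cis (2 * pi * real_of_int k * x) * tp L2 x"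
proof (induction L2)
  case Nil then show ?case by simp
next
  case (Cons p L2)
  obtain l b where p: "p = (l,b)" by force
  have "cis (2 * pi * real_of_int (k + l) * x) = cis (2 * pi * real_of_int k * x) * cis (2 * pi * real_of_int l * x)"
    by (simp add: cis_mult distrib_left distrib_right)
  then show ?case using Cons p by (simp add: algebra_simps)
qed

lemma tp_prodl: "tp (prodl L1 L2) x = tp L1 x * tp L2 x"
proof (induction L1)
  case Nil then show ?case by (simp add: prodl_def)
next
  case (Cons p L1)
  obtain k a where p: "p = (k,a)" by force
  have "prodl (p # L1) L2 = map (\<lambda>(l,b). (k+l, a*b)) L2 @ prodl L1 L2" by (simp add: prodl_def p)
  then have "tp (prodl (p # L1) L2) x = tp (map (\<lambda>(l,b). (k+l, a*b)) L2) x + tp (prodl L1 L2) x"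
    by (simp only: tp_append)
  also have "\<dots> = a * cis (2 * pi * real_of_int k * x) * tp L2 x + tp L1 x * tp L2 x"
    by (simp only: tp_map Cons.IH)
  also have "\<dots> = tp (p # L1) x * tp L2 x" by (simp add: p algebra_simps)
  finally show ?case .
qed

lemma cos_cis: "complex_of_real (cos \<theta>) = (cis \<theta> + cis (- \<theta>)) / 2"
  by (rule complex_eqI) simp_all

lemma sin_cis: "complex_of_real (sin \<theta>) = (cis \<theta> - cis (- \<theta>)) / (2 * \<i>)"
proof -
  have "cis \<theta> - cis (- \<theta>) = 2 * \<i> * complex_of_real (sin \<theta>)" by (rule complex_eqI) simp_all
  then show ?thesis by simp
qed

lemma poly_tp:
  assumes "real_polynomial_function g"
  shows "\<exists>L. \<forall>x. complex_of_real (g (cis (2 * pi * x))) = tp L x"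
  using assms
proof (induction rule: real_polynomial_function.induct)
  case (linear f)
  have lin: "linear f" using linear by (rule bounded_linear.linear)
  have fz: "f z = Re z * f 1 + Im z * f \<i>" for z
  proof -
    have "z = Re z *\<^sub>R 1 + Im z *\<^sub>R \<i>" by (simp add: complex_eq_iff)
    then have "f z = f (Re z *\<^sub>R 1 + Im z *\<^sub>R \<i>)" by simp
    also have "\<dots> = Re z * f 1 + Im z * f \<i>" using lin by (simp add: real_vector.linear_add real_vector.linear_scale)
    finally show ?thesis .
  qed
  define a where "a = complex_of_real (f 1)"
  define b where "b = complex_of_real (f \<i>)"
  define L where "L = [(1::int, a/2), (-1, a/2), (1, b/(2*\<i>)), (-1, - b/(2*\<i>))]"
  have "complex_of_real (f (cis (2 * pi * x))) = tp L x" for x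
  proof -
    have "complex_of_real (f (cis (2 * pi * x))) = of_real (cos (2*pi*x)) * a + of_real (sin (2*pi*x)) * b"
      unfolding fz[of "cis (2 * pi * x)"] a_def b_def by simp
    also have "\<dots> = tp L x" unfolding L_def cos_cis sin_cis by (simp add: field_simps)
    finally show ?thesis .
  qed
  then show ?case by blast
next
  case (const c)
  have "complex_of_real c = tp [(0::int, of_real c)] x" for x by simp
  then show ?case by blast
next
  case (add f g)
  obtain L1 L2 where "\<forall>x. complex_of_real (f (cis (2 * pi * x))) = tp L1 x" "\<forall>x. complex_of_real (g (cis (2 * pi * x))) = tp L2 x"
    using add.IH by blast
  then have "\<forall>x. complex_of_real (f (cis (2 * pi * x)) + g (cis (2 * pi * x))) = tp (L1 @ L2) x"
    by (simp add: tp_append)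
  then show ?case by blast
next
  case (mult f g)
  obtain L1 L2 where "\<forall>x. complex_of_real (f (cis (2 * pi * x))) = tp L1 x" "\<forall>x. complex_of_real (g (cis (2 * pi * x))) = tp L2 x"
    using mult.IH by blast
  then have "\<forall>x. complex_of_real (f (cis (2 * pi * x)) * g (cis (2 * pi * x))) = tp (prodl L1 L2) x"
    by (simp add: tp_prodl)
  then show ?case by blast
qed

lemma tp_avg_conv: "convergent (\<lambda>N. (\<Sum>n=1..N. tp L (\<beta> * real (hofH n))) / of_nat N)"
proof (induction L)
  case Nil then show ?case by (simp add: convergent_const)
next
  case (Cons p L)
  obtain k a where p: "p = (k,a)" by force
  define t where "t = 2 * pi * real_of_int k * \<beta>"
  have eq: "(\<Sum>n=1..N. tp (p # L) (\<beta> * real (hofH n))) / of_nat N =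
      a * ((\<Sum>n=1..N. cis (t * real (hofH n))) / of_nat N) + (\<Sum>n=1..N. tp L (\<beta> * real (hofH n))) / of_nat N" for N
    unfolding p t_def by (simp add: sum.distrib sum_distrib_left add_divide_distrib mult.assoc)
  have "convergent (\<lambda>N. a * ((\<Sum>n=1..N. cis (t * real (hofH n))) / of_nat N) + (\<Sum>n=1..N. tp L (\<beta> * real (hofH n))) / of_nat N)"
  proof (intro convergent_add Cons.IH)
    show "convergent (\<lambda>N. a * ((\<Sum>n=1..N. cis (t * real (hofH n))) / of_nat N))"
    proof -
      obtain l where l: "(\<lambda>N. (\<Sum>n=1..N. cis (t * real (hofH n))) / of_nat N) \<longlonglongrightarrow> l"
        using char_avg_conv[of t] unfolding convergent_def by blast
      have "(\<lambda>N. a * ((\<Sum>n=1..N. cis (t * real (hofH n))) / of_nat N)) \<longlonglongrightarrow> a * l"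
        by (rule tendsto_mult_left[OF l])
      then show ?thesis by (rule convergentI)
    qed
  qed
  then show ?case unfolding eq .
qed

lemma periodic_nat:
  fixes f :: "real \<Rightarrow> real"
  assumes per: "\<And>x. f (x + 1) = (f x :: real)"
  shows "f (x + real n) = f x"
proof (induction n)
  case 0 then show ?case by simp
next
  case (Suc n)
  have "f (x + real (Suc n)) = f ((x + real n) + 1)" by (simp add: algebra_simps)
  also have "\<dots> = f (x + real n)" by (rule per)
  finally show ?case using Suc by simp
qed

lemma periodic_int:
  fixes f :: "real \<Rightarrow> real"
  assumes per: "\<And>x. f (x + 1) = (f x :: real)"
  shows "f (x + real_of_int k) = f x"
proof (cases "k \<ge> 0")
  case True
  then have k: "real_of_int k = real (nat k)" by simp
  show ?thesis unfolding k by (rule periodic_nat[of f, OF per])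
next
  case False
  define n where "n = nat (- k)"
  have k: "real_of_int k = - real n" unfolding n_def using False by simp
  have "f (x + real_of_int k) = f ((x - real n) + real n)" using periodic_nat[of f, OF per, of "x - real n" n] unfolding k by simp
  then show ?thesis by simp
qed

lemma periodic_frac:
  fixes f :: "real \<Rightarrow> real" and x :: real
  assumes per: "\<And>x. f (x + 1) = (f x :: real)"
  shows "f (frac x) = f x"
proof -
  have "f (frac x + real_of_int \<lfloor>x\<rfloor>) = f (frac x)" by (rule periodic_int[of f, OF per])
  then show ?thesis by (simp add: frac_def)
qed

definition Fc :: "(real \<Rightarrow> real) \<Rightarrow> complex \<Rightarrow> real" where
  "Fc f z = f (Arg2pi z / (2 * pi))"

lemma Arg2pi_cis01: assumes "0 \<le> y" "y < 1" shows "Arg2pi (cis (2 * pi * y)) = 2 * pi * y"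
  by (rule Arg2pi_unique[of 1]) (use assms in \<open>auto simp: cis_conv_exp\<close>)

lemma cis_frac: "cis (2 * pi * x) = cis (2 * pi * frac x)"
proof -
  have "2 * pi * x = 2 * pi * frac x + 2 * pi * real_of_int \<lfloor>x\<rfloor>" by (simp add: frac_def algebra_simps)
  then show ?thesis by (simp add: cis_mult[symmetric] cis_int_2pi)
qed

lemma Fc_cis:
  fixes f :: "real \<Rightarrow> real"
  assumes per: "\<And>x. f (x + 1) = (f x :: real)"
  shows "Fc f (cis (2 * pi * x)) = f x"
proof -
  have "Fc f (cis (2 * pi * x)) = Fc f (cis (2 * pi * frac x))" by (simp only: cis_frac[of x])
  also have "\<dots> = f (frac x)" unfolding Fc_def using Arg2pi_cis01[OF frac_ge_0 frac_lt_1, of x] by simp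
  also have "\<dots> = f x" by (rule periodic_frac[of f, OF per])
  finally show ?thesis .
qed

lemma Fc_cont:
  assumes cont: "continuous_on UNIV f" and per: "\<And>x. f (x + 1) = (f x :: real)"
  shows "continuous_on (sphere 0 1) (Fc f)"
proof -
  define p where "p x = cis (2 * pi * x)" for x
  have pcont: "continuous_on {0..1} p" unfolding p_def by (intro continuous_intros)
  have pim: "p ` {0..1} = sphere 0 1"
  proof
    show "p ` {0..1} \<subseteq> sphere 0 1" unfolding p_def by auto
    show "sphere 0 1 \<subseteq> p ` {0..1}"
    proof
      fix z :: complex assume z: "z \<in> sphere 0 1"
      define y where "y = Arg2pi z / (2 * pi)"
      have y: "0 \<le> y" "y \<le> 1" using Arg2pi[of z] unfolding y_def by (auto simp: field_simps)
      have "p y = cis (Arg2pi z)" unfolding p_def y_def by simp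
      also have "\<dots> = z" using Arg2pi_eq[of z] z by (simp add: cis_conv_exp)
      finally show "z \<in> p ` {0..1}" using y by force
    qed
  qed
  have qm: "quotient_map (top_of_set {0..1}) (top_of_set (sphere 0 1)) p"
  proof (rule continuous_imp_quotient_map)
    show "continuous_map (top_of_set {0..1}) (top_of_set (sphere 0 1)) p"
      using pcont pim by (auto simp: continuous_map_subtopology_eu)
    show "compact_space (top_of_set {0..1::real})" by (simp add: compact_space_subtopology)
    show "Hausdorff_space (top_of_set (sphere (0::complex) 1))" by (simp add: Hausdorff_space_subtopology)
    show "p ` topspace (top_of_set {0..1}) = topspace (top_of_set (sphere 0 1))" using pim by simp
  qed
  have "continuous_on {0..1} (Fc f \<circ> p)"
  proof (rule continuous_on_eq[of _ f])
    show "continuous_on {0..1} f" using cont by (rule continuous_on_subset) simp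
    show "\<And>x. x \<in> {0..1} \<Longrightarrow> f x = (Fc f \<circ> p) x" unfolding p_def using Fc_cis[of f, OF per] by simp
  qed
  then have "continuous_map (top_of_set {0..1}) euclidean (Fc f \<circ> p)" by (simp add: continuous_map_iff_continuous)
  then have "continuous_map (top_of_set (sphere 0 1)) euclidean (Fc f)" by (rule continuous_compose_quotient_map[OF qm])
  then show ?thesis by (simp add: continuous_map_iff_continuous)
qed

lemma poly_avg_conv:
  assumes "real_polynomial_function g"
  shows "convergent (\<lambda>N. (\<Sum>n=1..N. g (cis (2 * pi * (\<beta> * real (hofH n))))) / real N)"
proof -
  obtain L where L: "\<And>x. complex_of_real (g (cis (2 * pi * x))) = tp L x" using poly_tp[OF assms] by blast
  obtain l where l: "(\<lambda>N. (\<Sum>n=1..N. tp L (\<beta> * real (hofH n))) / of_nat N) \<longlonglongrightarrow> l"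
    using tp_avg_conv[of L \<beta>] unfolding convergent_def by blast
  have lim: "(\<lambda>N. Re ((\<Sum>n=1..N. tp L (\<beta> * real (hofH n))) / of_nat N)) \<longlonglongrightarrow> Re l"
    by (rule tendsto_Re[OF l])
  have eq: "Re ((\<Sum>n=1..N. tp L (\<beta> * real (hofH n))) / of_nat N) =
      (\<Sum>n=1..N. g (cis (2 * pi * (\<beta> * real (hofH n))))) / real N" for N
  proof -
    have "(\<Sum>n=1..N. tp L (\<beta> * real (hofH n))) = complex_of_real (\<Sum>n=1..N. g (cis (2 * pi * (\<beta> * real (hofH n)))))"
      by (simp add: L[symmetric])
    then show ?thesis by (simp add: Re_divide_of_nat)
  qed
  have "(\<lambda>N. Re ((\<Sum>n=1..N. tp L (\<beta> * real (hofH n))) / of_nat N)) =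
        (\<lambda>N. (\<Sum>n=1..N. g (cis (2 * pi * (\<beta> * real (hofH n))))) / real N)"
    by (rule ext) (rule eq)
  then show ?thesis using lim unfolding convergent_def by metis
qed

lemma f_avg_conv:
  fixes f :: "real \<Rightarrow> real"
  assumes cont: "continuous_on UNIV f" and per: "\<And>x. f (x + 1) = f x"
  shows "convergent (\<lambda>N. (\<Sum>n=1..N. f (\<beta> * real (hofH n))) / real N)"
proof -
  define A where "A g N = (\<Sum>n=1..N. g (\<beta> * real (hofH n))) / real N" for g :: "real \<Rightarrow> real" and N
  have "Cauchy (A f)"
  proof (rule CauchyI)
    fix e :: real assume e: "e > 0"
    obtain g where g: "real_polynomial_function g" "\<And>z. z \<in> sphere 0 1 \<Longrightarrow> \<bar>Fc f z - g z\<bar> < e/3"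
      using Stone_Weierstrass_real_polynomial_function[OF compact_sphere Fc_cont[OF cont per], of "e/3"] e by auto
    define h where "h x = g (cis (2 * pi * x))" for x
    have fh: "\<bar>f x - h x\<bar> < e/3" for x
      using g(2)[of "cis (2 * pi * x)"] Fc_cis[of f, OF per, of x] unfolding h_def by simp
    have conv: "convergent (A h)" unfolding A_def h_def by (rule poly_avg_conv[OF g(1)])
    have close: "\<bar>A f N - A h N\<bar> \<le> e/3" for N
    proof (cases "N = 0")
      case True then show ?thesis using e by (simp add: A_def)
    next
      case False
      have "\<bar>(\<Sum>n=1..N. f (\<beta> * real (hofH n))) - (\<Sum>n=1..N. h (\<beta> * real (hofH n)))\<bar>
          \<le> (\<Sum>n=1..N. \<bar>f (\<beta> * real (hofH n)) - h (\<beta> * real (hofH n))\<bar>)"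
        unfolding sum_subtractf[symmetric] by (rule sum_abs)
      also have "\<dots> \<le> (\<Sum>n=1..N. e/3)" by (intro sum_mono less_imp_le fh)
      also have "\<dots> = real N * (e/3)" by simp
      finally have "\<bar>A f N - A h N\<bar> * real N \<le> real N * (e/3)"
        using False unfolding A_def by (simp add: diff_divide_distrib[symmetric] abs_divide)
      then show ?thesis using False by (simp add: mult.commute)
    qed
    obtain M where M: "\<And>m n. m \<ge> M \<Longrightarrow> n \<ge> M \<Longrightarrow> norm (A h m - A h n) < e/3"
      using CauchyD[OF conv[unfolded Cauchy_convergent_iff[symmetric]], of "e/3"] e by auto
    show "\<exists>M. \<forall>m\<ge>M. \<forall>n\<ge>M. norm (A f m - A f n) < e"
    proof (intro exI allI impI)
      fix m n assume mn: "m \<ge> M" "n \<ge> M"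
      have "norm (A f m - A f n) \<le> \<bar>A f m - A h m\<bar> + \<bar>A h m - A h n\<bar> + \<bar>A h n - A f n\<bar>" by simp
      also have "\<dots> < e/3 + e/3 + e/3"
        using close[of m] close[of n] M[OF mn] by (simp add: abs_minus_commute)
      finally show "norm (A f m - A f n) < e" by simp
    qed
  qed
  then show ?thesis unfolding Cauchy_convergent_iff A_def .
qed

lemma frac_measurable[measurable]: "frac \<in> borel_measurable (borel :: real measure)"
proof -
  have "(\<lambda>x::real. x - real_of_int \<lfloor>x\<rfloor>) \<in> borel_measurable borel" by measurable
  then show ?thesis by (simp add: frac_def[abs_def])
qed

theorem mainTheorem7:
  fixes \<beta> :: real
  shows "\<exists>\<mu>. circle_prob_measure \<mu> \<and> distr_mod1_converges (\<lambda>n. \<beta> * real (hofH n)) \<mu>"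
proof -
  define u where "u n = \<beta> * real (hofH n)" for n
  define A where "A f N = (\<Sum>n=1..N. f (u n)) / real N" for f :: "real \<Rightarrow> real" and N
  define P where "P N = pmf_of_set {1..Suc N}" for N
  define \<mu>N where "\<mu>N N = distr (measure_pmf (P N)) borel (\<lambda>n. frac (u n))" for N
  have meas: "(\<lambda>n. frac (u n)) \<in> measure_pmf p \<rightarrow>\<^sub>M borel" for p by (simp add: measurable_pmf_measure1)
  have rd: "real_distribution (\<mu>N N)" for N
    unfolding real_distribution_def real_distribution_axioms_def \<mu>N_def
    using prob_space.prob_space_distr[OF prob_space_measure_pmf meas] by simp
  have "tight \<mu>N"
    unfolding tight_def
  proof (intro conjI allI impI)
    show "real_distribution (\<mu>N n)" for n by (rule rd)
    fix \<epsilon> :: real assume "\<epsilon> > 0"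
    have "measure (\<mu>N n) {-1<..1} = 1" for n
    proof -
      have "measure (\<mu>N n) {-1<..1} = measure (measure_pmf (P n)) ((\<lambda>n. frac (u n)) -` {-1<..1} \<inter> space (measure_pmf (P n)))"
        unfolding \<mu>N_def by (rule measure_distr[OF meas]) simp
      also have "(\<lambda>n. frac (u n)) -` {-1<..1} \<inter> space (measure_pmf (P n)) = UNIV"
      proof -
        have "-1 < frac (u x) \<and> frac (u x) \<le> 1" for x using frac_ge_0[of "u x"] frac_lt_1[of "u x"] by linarith
        then show ?thesis by auto
      qed
      finally show ?thesis by simp
    qed
    then show "\<exists>a b. a < b \<and> (\<forall>n. 1 - \<epsilon> < measure (\<mu>N n) {a<..b})"
      using \<open>\<epsilon> > 0\<close> by (intro exI[of _ "-1"] exI[of _ 1]) auto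
  qed
  then obtain r M where r: "strict_mono r" and M: "real_distribution M" and wc: "weak_conv_m (\<mu>N \<circ> id \<circ> r) M"
    using tight_imp_convergent_subsubsequence[of \<mu>N id] by (auto simp: strict_mono_def)
  interpret M: real_distribution M by (rule M)
  define \<mu> where "\<mu> = distr M borel frac"
  have "circle_prob_measure \<mu>"
    unfolding circle_prob_measure_def
  proof (intro conjI)
    show "prob_space \<mu>" unfolding \<mu>_def by (rule M.prob_space_distr) simp
    show "sets \<mu> = sets borel" unfolding \<mu>_def by simp
    have "emeasure \<mu> (UNIV - {0..<1}) = emeasure M (frac -` (UNIV - {0..<1}) \<inter> space M)"
      unfolding \<mu>_def by (rule emeasure_distr) auto
    also have "frac -` (UNIV - {0..<1}) \<inter> space M = {}"
      using frac_ge_0[where 'a=real] frac_lt_1[where 'a=real] by auto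
    finally show "emeasure \<mu> (UNIV - {0..<1}) = 0" by simp
  qed
  moreover have "distr_mod1_converges u \<mu>"
    unfolding distr_mod1_converges_def
  proof (intro allI impI)
    fix f :: "real \<Rightarrow> real"
    assume cont: "continuous_on UNIV f" and per: "\<forall>x. f (x + 1) = f x"
    have per': "\<And>x. f (x + 1) = f x" using per by blast
    have ff: "f (frac x) = f x" for x by (rule periodic_frac[of f, OF per'])
    have fm: "f \<in> borel_measurable borel" by (rule borel_measurable_continuous_onI[OF cont])
    obtain B where B: "\<And>x. \<bar>f x\<bar> \<le> B"
    proof -
      have "bounded (f ` {0..1})"
        by (intro compact_imp_bounded compact_continuous_image continuous_on_subset[OF cont]) auto
      then obtain B where "\<forall>y\<in>f ` {0..1}. \<bar>y\<bar> \<le> B" by (auto simp: bounded_real)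
      then have "\<bar>f x\<bar> \<le> B" for x using ff[of x] frac_ge_0[of x] frac_lt_1[of x] by (metis atLeastAtMost_iff image_eqI less_imp_le)
      then show ?thesis using that by blast
    qed
    have isc: "isCont f x" for x using cont by (simp add: continuous_on_eq_continuous_at)
    have intN: "integral\<^sup>L (\<mu>N N) f = A f (Suc N)" for N
    proof -
      have "integral\<^sup>L (\<mu>N N) f = integral\<^sup>L (measure_pmf (P N)) (\<lambda>n. f (frac (u n)))"
        unfolding \<mu>N_def by (rule integral_distr[OF meas fm])
      also have "\<dots> = (\<Sum>n\<in>{1..Suc N}. f (frac (u n))) / real (card {1..Suc N})"
        unfolding P_def by (rule integral_pmf_of_set) auto
      also have "\<dots> = A f (Suc N)" unfolding A_def ff by simp
      finally show ?thesis .
    qed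
    have l1: "(\<lambda>k. integral\<^sup>L ((\<mu>N \<circ> id \<circ> r) k) f) \<longlonglongrightarrow> integral\<^sup>L M f"
      by (rule weak_conv_imp_integral_bdd_continuous_conv[OF _ M wc isc, of B])
        (use rd B in auto)
    obtain Lf where Lf: "A f \<longlonglongrightarrow> Lf"
      using f_avg_conv[OF cont per', of \<beta>] unfolding convergent_def A_def u_def by blast
    have "strict_mono (Suc \<circ> r)" using r by (simp add: strict_mono_def)
    then have l2: "(A f \<circ> (Suc \<circ> r)) \<longlonglongrightarrow> Lf" by (rule LIMSEQ_subseq_LIMSEQ[OF Lf])
    have "(\<lambda>k. integral\<^sup>L ((\<mu>N \<circ> id \<circ> r) k) f) = A f \<circ> (Suc \<circ> r)" by (rule ext) (simp add: intN)
    then have "Lf = integral\<^sup>L M f" using l1 l2 LIMSEQ_unique by metis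
    moreover have "integral\<^sup>L \<mu> f = integral\<^sup>L M f"
    proof -
      have "integral\<^sup>L \<mu> f = integral\<^sup>L M (\<lambda>x. f (frac x))" unfolding \<mu>_def by (rule integral_distr) (auto simp: fm)
      then show ?thesis by (simp add: ff)
    qed
    ultimately show "(\<lambda>N. (\<Sum>n = 1..N. f (u n)) / real N) \<longlonglongrightarrow> integral\<^sup>L \<mu> f"
      using Lf unfolding A_def by simp
  qed
  ultimately show ?thesis unfolding u_def by blast
qed

end
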